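(* Assume [H-3]. For $0\le t<T$ and $s\in[t,T]$, the resolvent can be written $$R_{s,T}=\mathbb T^\alpha_{T-t}\,\hat R^{t,T}_{\frac{s-t}{T-t}}\,(\mathbb T^\alpha_{T-t})^{-1},$$ where the matrices $\hat R^{t,T}_{u}$, $u\in[0,1]$, are non-degenerate and bounded uniformly in $s\in[t,T]$, with constants depending on $T$.
   Context: $d,n\ge1$, $\alpha\in(0,2)$. $A_t$ is the $nd\times nd$ matrix with $d\times d$ blocks $a^{i,j}_t$, $a^{i,j}_t=0$ if $j<i-1$, measurable and bounded in time. [H-3]: $\underline\alpha|\xi|^2\le\langle a^{i,i-1}_t\xi,\xi\rangle\le\overline\alpha|\xi|^2$ for $\xi\in\mathbb R^d$, $i\in\{2,\dots,n\}$, and $\|a^{i,j}_t\|\le\overline\alpha$. The resolvent solves $\frac{d}{ds}R_{s,T}=A_sR_{s,T}$, $R_{T,T}=I_{nd\times nd}$. $\mathbb T^\alpha_u=\mathrm{Diag}(u^{1/\alpha}I_d,u^{1+1/\alpha}I_d,\dots,u^{n-1+1/\alpha}I_d)$. *)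

theory Defs
  imports "HOL-Analysis.Analysis"
begin

text \<open>Block matrices of size nd x nd are represented as functions
  nat \<Rightarrow> nat \<Rightarrow> real^'d^'d, blocks indexed by i,j in {1..n};
  d = CARD('d).\<close>

type_synonym 'd bmat = "nat \<Rightarrow> nat \<Rightarrow> real^'d^'d"

definition bmul :: "nat \<Rightarrow> 'd::finite bmat \<Rightarrow> 'd bmat \<Rightarrow> 'd bmat" where
  "bmul n X Y = (\<lambda>i j. \<Sum>k\<in>{1..n}. X i k ** Y k j)"

definition bid :: "'d::finite bmat" where
  "bid = (\<lambda>i j. if i = j then mat 1 else 0)"

definition beq :: "nat \<Rightarrow> 'd::finite bmat \<Rightarrow> 'd bmat \<Rightarrow> bool" where
  "beq n X Y \<longleftrightarrow> (\<forall>i\<in>{1..n}. \<forall>j\<in>{1..n}. X i j = Y i j)"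

definition Tscale :: "real \<Rightarrow> real \<Rightarrow> 'd::finite bmat" where
  "Tscale \<alpha> u = (\<lambda>i j. if i = j then (u powr (real i - 1 + 1 / \<alpha>)) *\<^sub>R mat 1 else 0)"

definition Tscale_inv :: "real \<Rightarrow> real \<Rightarrow> 'd::finite bmat" where
  "Tscale_inv \<alpha> u = (\<lambda>i j. if i = j then (u powr (- (real i - 1 + 1 / \<alpha>))) *\<^sub>R mat 1 else 0)"

end

theory Submission
  imports Defs
begin
lemma bil1: "bilinear (\<lambda>(x::real^'n^'m) (y::real^'k^'n). x ** y)"
  unfolding bilinear_def
  by (auto intro!: linearI simp: vec_eq_iff matrix_matrix_mult_def sum.distrib sum_distrib_left distrib_left distrib_right mult_ac)

lemma bil2: "bilinear (\<lambda>(y::real^'k^'n) (x::real^'n^'m). x ** y)"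
  unfolding bilinear_def
  by (auto intro!: linearI simp: vec_eq_iff matrix_matrix_mult_def sum.distrib sum_distrib_left distrib_left distrib_right mult_ac)

lemma meas1: "(f::real \<Rightarrow> 'a::euclidean_space) \<in> borel_measurable lborel \<Longrightarrow> f \<in> borel_measurable (lebesgue_on S)"
  by (metis measurable_completion measurable_restrict_space1)

lemma int_prod:
  fixes X A :: "real \<Rightarrow> real^'d^'d"
  assumes X: "continuous_on {a..b} X" and A: "A \<in> borel_measurable lborel"
    and Ab: "\<And>r. r \<in> {a..b} \<Longrightarrow> norm (A r) \<le> L"
  shows "(\<lambda>r. X r ** A r) integrable_on {a..b}" "(\<lambda>r. A r ** X r) integrable_on {a..b}"
proof -
  have bA: "bounded (A ` {a..b})" using Ab unfolding bounded_iff by blast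
  have Xi: "X absolutely_integrable_on {a..b}" by (rule absolutely_integrable_continuous_real[OF X])
  have "(\<lambda>r. X r ** A r) absolutely_integrable_on {a..b}"
    using absolutely_integrable_bounded_measurable_product[OF bil2 meas1[OF A] _ bA Xi] by simp
  then show "(\<lambda>r. X r ** A r) integrable_on {a..b}"
    using set_lebesgue_integral_eq_integral(1) absolutely_integrable_on_def by blast
  have "(\<lambda>r. A r ** X r) absolutely_integrable_on {a..b}"
    using absolutely_integrable_bounded_measurable_product[OF bil1 meas1[OF A] _ bA Xi] by simp
  then show "(\<lambda>r. A r ** X r) integrable_on {a..b}"
    using set_lebesgue_integral_eq_integral(1) absolutely_integrable_on_def by blast
qed

lemma mm_bound: "\<exists>B>0. \<forall>(x::real^'d^'d) (y::real^'d^'d). norm (x ** y) \<le> B * norm x * norm y"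
  using bilinear_bounded_pos[OF bil1] by blast

lemma matrix_norm_le_entries:
  fixes M :: "real^'d^'d"
  assumes "\<And>i j. \<bar>M $ i $ j\<bar> \<le> c"
  shows "norm M \<le> real CARD('d) * real CARD('d) * c"
proof -
  have "norm M \<le> (\<Sum>i\<in>UNIV. norm (M $ i))"
    unfolding norm_vec_def by (rule L2_set_le_sum) simp
  also have "\<dots> \<le> (\<Sum>i\<in>(UNIV::'d set). real CARD('d) * c)"
  proof (rule sum_mono)
    fix i
    have "norm (M $ i) \<le> (\<Sum>j\<in>UNIV. \<bar>M $ i $ j\<bar>)" by (rule norm_le_l1_cart)
    also have "\<dots> \<le> (\<Sum>j\<in>(UNIV::'d set). c)" by (rule sum_mono) (rule assms)
    finally show "norm (M $ i) \<le> real CARD('d) * c" by simp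
  qed
  finally show ?thesis by simp
qed

lemma onorm_to_norm:
  fixes M :: "real^'d^'d"
  assumes "onorm (\<lambda>x. M *v x) \<le> c"
  shows "norm M \<le> real CARD('d) * real CARD('d) * c"
proof (rule matrix_norm_le_entries)
  fix i j
  have "\<bar>matrix ((*v) M) $ i $ j\<bar> \<le> onorm ((*v) M)"
    by (rule component_le_onorm) (rule matrix_vector_mul_linear)
  then show "\<bar>M $ i $ j\<bar> \<le> c" using assms by (simp add: matrix_of_matrix_vector_mul)
qed

lemma tri:
  fixes F :: "real \<Rightarrow> 'd::finite bmat"
  assumes T: "0 < T" and L: "0 \<le> L"
    and Fb: "\<And>s i j. s\<in>{0..T} \<Longrightarrow> i\<in>{1..n} \<Longrightarrow> j\<in>{1..n} \<Longrightarrow> norm (F s i j) \<le> K0"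
    and eq: "\<And>s i j. s\<in>{0..T} \<Longrightarrow> i\<in>{1..n} \<Longrightarrow> j\<in>{1..n} \<Longrightarrow> j < i \<Longrightarrow>
       \<exists>g. (g has_integral F s i j) {s..T} \<and>
         (\<forall>r\<in>{s..T}. norm (g r) \<le> L * (\<Sum>a\<in>{1..n}. \<Sum>b\<in>{1..n}. if i + b \<le> a + j + 1 then norm (F r a b) else 0))"
  shows "\<exists>K. \<forall>s\<in>{0..T}. \<forall>i\<in>{1..n}. \<forall>j\<in>{1..n}. norm (F s i j) \<le> K * (T-s)^(i-j)"
proof -
  have P: "\<exists>K\<ge>0. \<forall>s\<in>{0..T}. \<forall>i\<in>{1..n}. \<forall>j\<in>{1..n}. norm (F s i j) \<le> K * (T-s)^(min (i-j) m)" for m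
  proof (induction m)
    case 0
    show ?case
      by (rule exI[of _ "max K0 0"]) (auto intro: order_trans[OF Fb])
  next
    case (Suc m)
    then obtain K where K0: "K \<ge> 0" and K: "\<And>s i j. s\<in>{0..T} \<Longrightarrow> i\<in>{1..n} \<Longrightarrow> j\<in>{1..n} \<Longrightarrow>
       norm (F s i j) \<le> K * (T-s)^(min (i-j) m)" by blast
    define K' where "K' = max K (L * (real n * real n * K))"
    have K'0: "K' \<ge> 0" unfolding K'_def using K0 by simp
    show ?case
    proof (intro exI[of _ K'] conjI K'0 ballI)
      fix s i j assume s: "s \<in> {0..T}" and i: "i \<in> {1..n}" and j: "j \<in> {1..n}"
      have Ts: "0 \<le> T - s" using s by auto
      show "norm (F s i j) \<le> K' * (T-s)^(min (i-j) (Suc m))"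
      proof (cases "i - j \<le> m")
        case True
        then have "min (i-j) (Suc m) = min (i-j) m" by simp
        moreover have "K * (T-s)^(min (i-j) m) \<le> K' * (T-s)^(min (i-j) m)"
          by (intro mult_right_mono zero_le_power Ts) (auto simp: K'_def)
        ultimately show ?thesis using K[OF s i j] by simp
      next
        case False
        then have ji: "j < i" and mm: "min (i-j) (Suc m) = Suc m" by auto
        obtain g where g: "(g has_integral F s i j) {s..T}"
          and gb: "\<forall>r\<in>{s..T}. norm (g r) \<le> L * (\<Sum>a\<in>{1..n}. \<Sum>b\<in>{1..n}. if i + b \<le> a + j + 1 then norm (F r a b) else 0)"
          using eq[OF s i j ji] by blast
        have gb2: "norm (g r) \<le> L * (real n * real n * (K * (T-s)^m))" if r: "r \<in> {s..T} - {}" for r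
        proof -
          have r0: "r \<in> {0..T}" using r s by auto
          have "(\<Sum>a\<in>{1..n}. \<Sum>b\<in>{1..n}. if i + b \<le> a + j + 1 then norm (F r a b) else 0)
              \<le> (\<Sum>a\<in>{1..n}. \<Sum>b\<in>{1..n}. K * (T-s)^m)"
          proof (intro sum_mono)
            fix a b assume a: "a \<in> {1..n}" and b: "b \<in> {1..n}"
            show "(if i + b \<le> a + j + 1 then norm (F r a b) else 0) \<le> K * (T-s)^m"
            proof (cases "i + b \<le> a + j + 1")
              case True
              then have "min (a - b) m = m" using False by auto
              then have "norm (F r a b) \<le> K * (T-r)^m" using K[OF r0 a b] by simp
              also have "\<dots> \<le> K * (T-s)^m"
                using r K0 by (intro mult_left_mono power_mono) auto
              finally show ?thesis using True by simp
            qed (use K0 Ts in simp)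
          qed
          then have "(\<Sum>a\<in>{1..n}. \<Sum>b\<in>{1..n}. if i + b \<le> a + j + 1 then norm (F r a b) else 0)
              \<le> real n * real n * (K * (T-s)^m)" by simp
          then show ?thesis using gb r L by (meson DiffD1 mult_left_mono order_trans)
        qed
        have "norm (F s i j) \<le> L * (real n * real n * (K * (T-s)^m)) * (T - s)"
          using has_integral_bound_real[OF _ _ g gb2, of "{}"] L K0 Ts s by (simp add: content_real_if)
        also have "\<dots> = (L * (real n * real n * K)) * (T-s)^(Suc m)"
          using s by (simp add: algebra_simps)
        also have "\<dots> \<le> K' * (T-s)^(Suc m)"
          by (intro mult_right_mono zero_le_power Ts) (auto simp: K'_def)
        finally show ?thesis using mm by simp
      qed
    qed
  qed
  obtain K where K: "\<forall>s\<in>{0..T}. \<forall>i\<in>{1..n}. \<forall>j\<in>{1..n}. norm (F s i j) \<le> K * (T-s)^(min (i-j) n)"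
    using P by blast
  show ?thesis
  proof (intro exI[of _ K] ballI)
    fix s i j assume "s \<in> {0..T}" "i \<in> {1..n}" "j \<in> {1..n}"
    moreover have "min (i-j) n = i - j" using \<open>i \<in> {1..n}\<close> by auto
    ultimately show "norm (F s i j) \<le> K * (T-s)^(i-j)" using K by metis
  qed
qed

lemma poly_int:
  assumes "s \<le> (T::real)"
  shows "((\<lambda>r. (T - r)^k) has_integral (T - s)^(Suc k) / real (Suc k)) {s..T}"
proof -
  have "((\<lambda>r. (T - r)^k) has_integral ((\<lambda>r. - ((T - r)^(Suc k) / real (Suc k))) T - (\<lambda>r. - ((T - r)^(Suc k) / real (Suc k))) s)) {s..T}"
  proof (rule fundamental_theorem_of_calculus[OF assms])
    fix x assume "x \<in> {s..T}"
    show "((\<lambda>r. - ((T - r)^(Suc k) / real (Suc k))) has_vector_derivative (T - x)^k) (at x within {s..T})"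
      unfolding has_real_derivative_iff_has_vector_derivative[symmetric]
      by (auto intro!: derivative_eq_intros) (cases k, simp_all add: field_simps)
  qed
  then show ?thesis by simp
qed

lemma fin_bound:
  fixes F :: "'s \<Rightarrow> nat \<Rightarrow> nat \<Rightarrow> 'a::real_normed_vector"
  assumes "\<And>i j. i \<in> I \<Longrightarrow> j \<in> I \<Longrightarrow> \<exists>K. \<forall>s\<in>S. norm (F s i j) \<le> K" and "finite I"
  shows "\<exists>K. \<forall>s\<in>S. \<forall>i\<in>I. \<forall>j\<in>I. norm (F s i j) \<le> K"
proof -
  define Kf where "Kf i j = (SOME K. \<forall>s\<in>S. norm (F s i j) \<le> K)" for i j
  have Kf: "\<forall>s\<in>S. norm (F s i j) \<le> Kf i j" if "i \<in> I" "j \<in> I" for i j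
    unfolding Kf_def using someI_ex[OF assms(1)[OF that]] .
  show ?thesis
  proof (intro exI[of _ "\<Sum>i\<in>I. \<Sum>j\<in>I. \<bar>Kf i j\<bar>"] ballI)
    fix s i j assume s: "s \<in> S" and i: "i \<in> I" and j: "j \<in> I"
    have "norm (F s i j) \<le> \<bar>Kf i j\<bar>" using Kf[OF i j] s by force
    also have "\<dots> \<le> (\<Sum>j\<in>I. \<bar>Kf i j\<bar>)" by (rule member_le_sum) (use j assms(2) in auto)
    also have "\<dots> \<le> (\<Sum>i\<in>I. \<Sum>j\<in>I. \<bar>Kf i j\<bar>)" by (rule member_le_sum) (use i assms(2) in \<open>auto intro: sum_nonneg\<close>)
    finally show "norm (F s i j) \<le> (\<Sum>i\<in>I. \<Sum>j\<in>I. \<bar>Kf i j\<bar>)" .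
  qed
qed

lemma cont_bound:
  fixes f :: "real \<Rightarrow> 'a::real_normed_vector"
  assumes "continuous_on {a..b} f"
  shows "\<exists>K. \<forall>s\<in>{a..b}. norm (f s) \<le> K"
proof -
  have "compact (f ` {a..b})" by (rule compact_continuous_image[OF assms compact_Icc])
  then have "bounded (f ` {a..b})" by (rule compact_imp_bounded)
  then show ?thesis unfolding bounded_iff by auto
qed

lemma fin_delta:
  fixes Q :: "'k \<Rightarrow> real \<Rightarrow> bool"
  assumes "finite K" and "\<And>k. k \<in> K \<Longrightarrow> \<exists>d>0. \<forall>d'. 0 < d' \<and> d' \<le> d \<longrightarrow> Q k d'"
  shows "\<exists>d>0. \<forall>k\<in>K. \<forall>d'. 0 < d' \<and> d' \<le> d \<longrightarrow> Q k d'"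
  using assms
proof (induction K rule: finite_induct)
  case empty
  show ?case by (rule exI[of _ "1::real"]) simp
next
  case (insert x F)
  then obtain d1 where d1: "d1 > 0" "\<forall>k\<in>F. \<forall>d'. 0 < d' \<and> d' \<le> d1 \<longrightarrow> Q k d'"
    by blast
  obtain d2 where d2: "d2 > 0" "\<forall>d'. 0 < d' \<and> d' \<le> d2 \<longrightarrow> Q x d'" using insert.prems by blast
  show ?case using d1 d2 by (intro exI[of _ "min d1 d2"]) auto
qed

primrec pic :: "nat \<Rightarrow> nat \<Rightarrow> real \<Rightarrow> (real \<Rightarrow> 'd::finite bmat) \<Rightarrow> real \<Rightarrow> 'd bmat" where
  "pic 0 n T A = (\<lambda>s. bid)"
| "pic (Suc k) n T A = (\<lambda>s i j. integral {s..T} (\<lambda>r. \<Sum>l\<in>{1..n}. pic k n T A r i l ** A r l j))"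

locale sys =
  fixes n :: nat and T LA Bm Mb :: real and A :: "real \<Rightarrow> 'd::finite bmat"
  assumes Tpos: "0 < T" and LA0: "0 \<le> LA"
    and Bm: "0 < Bm" "\<And>(x::real^'d^'d) (y::real^'d^'d). norm (x ** y) \<le> Bm * norm x * norm y"
    and bid_norm: "\<And>i j. norm (bid i j :: real^'d^'d) \<le> Mb"
    and Ameas: "\<And>i j. (\<lambda>s. A s i j) \<in> borel_measurable lborel"
    and Abd: "\<And>s i j. s\<in>{0..T} \<Longrightarrow> i\<in>{1..n} \<Longrightarrow> j\<in>{1..n} \<Longrightarrow> norm (A s i j) \<le> LA"
begin

lemma int_XA:
  assumes X: "\<And>i j. i\<in>{1..n} \<Longrightarrow> j\<in>{1..n} \<Longrightarrow> continuous_on {0..T} (\<lambda>s. X s i j)"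
    and i: "i\<in>{1..n}" and j: "j\<in>{1..n}" and ab: "0 \<le> a" "b \<le> T"
  shows "(\<lambda>r. \<Sum>l\<in>{1..n}. X r i l ** A r l j) integrable_on {a..b}"
    and "(\<lambda>r. \<Sum>l\<in>{1..n}. A r i l ** X r l j) integrable_on {a..b}"
proof -
  have sub: "{a..b} \<subseteq> {0..T}" using ab by auto
  show "(\<lambda>r. \<Sum>l\<in>{1..n}. X r i l ** A r l j) integrable_on {a..b}"
  proof (rule integrable_sum)
    fix l assume l: "l \<in> {1..n}"
    show "(\<lambda>r. X r i l ** A r l j) integrable_on {a..b}"
      by (rule int_prod(1)[OF continuous_on_subset[OF X[OF i l] sub] Ameas, where L=LA])
         (use Abd[OF _ l j] sub in auto)
  qed simp
  show "(\<lambda>r. \<Sum>l\<in>{1..n}. A r i l ** X r l j) integrable_on {a..b}"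
  proof (rule integrable_sum)
    fix l assume l: "l \<in> {1..n}"
    show "(\<lambda>r. A r i l ** X r l j) integrable_on {a..b}"
      by (rule int_prod(2)[OF continuous_on_subset[OF X[OF l j] sub] Ameas, where L=LA])
         (use Abd[OF _ i l] sub in auto)
  qed simp
qed

lemma norm_XA:
  assumes r: "r \<in> {0..T}" and i: "i\<in>{1..n}" and j: "j\<in>{1..n}"
  shows "norm (\<Sum>l\<in>{1..n}. X r i l ** A r l j) \<le> (\<Sum>l\<in>{1..n}. Bm * LA * norm (X r i l))"
    and "norm (\<Sum>l\<in>{1..n}. A r i l ** X r l j) \<le> (\<Sum>l\<in>{1..n}. Bm * LA * norm (X r l j))"
proof -
  have "norm (\<Sum>l\<in>{1..n}. X r i l ** A r l j) \<le> (\<Sum>l\<in>{1..n}. norm (X r i l ** A r l j))"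
    by (rule norm_sum)
  also have "\<dots> \<le> (\<Sum>l\<in>{1..n}. Bm * LA * norm (X r i l))"
  proof (rule sum_mono)
    fix l assume l: "l \<in> {1..n}"
    have "norm (X r i l ** A r l j) \<le> Bm * norm (X r i l) * norm (A r l j)" by (rule Bm(2))
    also have "\<dots> \<le> Bm * norm (X r i l) * LA"
      using Abd[OF r l j] Bm(1) by (intro mult_left_mono) auto
    finally show "norm (X r i l ** A r l j) \<le> Bm * LA * norm (X r i l)" by (simp add: mult_ac)
  qed
  finally show "norm (\<Sum>l\<in>{1..n}. X r i l ** A r l j) \<le> (\<Sum>l\<in>{1..n}. Bm * LA * norm (X r i l))" .
  have "norm (\<Sum>l\<in>{1..n}. A r i l ** X r l j) \<le> (\<Sum>l\<in>{1..n}. norm (A r i l ** X r l j))"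
    by (rule norm_sum)
  also have "\<dots> \<le> (\<Sum>l\<in>{1..n}. Bm * LA * norm (X r l j))"
  proof (rule sum_mono)
    fix l assume l: "l \<in> {1..n}"
    have "norm (A r i l ** X r l j) \<le> Bm * norm (A r i l) * norm (X r l j)" by (rule Bm(2))
    also have "\<dots> \<le> Bm * LA * norm (X r l j)"
      using Abd[OF r i l] Bm(1) by (intro mult_right_mono mult_left_mono) auto
    finally show "norm (A r i l ** X r l j) \<le> Bm * LA * norm (X r l j)" .
  qed
  finally show "norm (\<Sum>l\<in>{1..n}. A r i l ** X r l j) \<le> (\<Sum>l\<in>{1..n}. Bm * LA * norm (X r l j))" .
qed

definition "cc = real n * Bm * LA"

lemma cc0: "0 \<le> cc" unfolding cc_def using Bm(1) LA0 by simp

lemma pic_props: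
  shows "(\<forall>i\<in>{1..n}. \<forall>j\<in>{1..n}. continuous_on {0..T} (\<lambda>s. pic k n T A s i j)) \<and>
    (\<forall>s\<in>{0..T}. \<forall>i\<in>{1..n}. \<forall>j\<in>{1..n}. norm (pic k n T A s i j) \<le> Mb * (cc * (T - s))^k / fact k)"
proof (induction k)
  case 0
  show ?case using bid_norm by simp
next
  case (Suc k)
  then have C: "\<And>i j. i\<in>{1..n} \<Longrightarrow> j\<in>{1..n} \<Longrightarrow> continuous_on {0..T} (\<lambda>s. pic k n T A s i j)"
    and B: "\<And>s i j. s\<in>{0..T} \<Longrightarrow> i\<in>{1..n} \<Longrightarrow> j\<in>{1..n} \<Longrightarrow> norm (pic k n T A s i j) \<le> Mb * (cc * (T - s))^k / fact k"
    by auto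
  have cont: "continuous_on {0..T} (\<lambda>s. pic (Suc k) n T A s i j)" if i: "i\<in>{1..n}" and j: "j\<in>{1..n}" for i j
    using indefinite_integral_continuous_1'[OF int_XA(1)[OF C i j order_refl order_refl]] by simp
  have bnd: "norm (pic (Suc k) n T A s i j) \<le> Mb * (cc * (T - s))^(Suc k) / fact (Suc k)"
    if s: "s\<in>{0..T}" and i: "i\<in>{1..n}" and j: "j\<in>{1..n}" for s i j
  proof -
    let ?h = "\<lambda>r. (Mb * cc ^ Suc k / fact k) * (T - r)^k"
    have hi: "(?h has_integral (Mb * cc ^ Suc k / fact k) * ((T - s)^(Suc k) / real (Suc k))) {s..T}"
      by (rule has_integral_mult_right[OF poly_int]) (use s in auto)
    have "norm (pic (Suc k) n T A s i j) \<le> integral {s..T} ?h"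
    proof (simp only: pic.simps, rule integral_norm_bound_integral)
      show "(\<lambda>r. \<Sum>l\<in>{1..n}. pic k n T A r i l ** A r l j) integrable_on {s..T}"
        by (rule int_XA(1)[OF C i j]) (use s in auto)
      show "?h integrable_on {s..T}" using hi by blast
      fix r assume r: "r \<in> {s..T}"
      then have r0: "r \<in> {0..T}" using s by auto
      have "norm (\<Sum>l\<in>{1..n}. pic k n T A r i l ** A r l j) \<le> (\<Sum>l\<in>{1..n}. Bm * LA * norm (pic k n T A r i l))"
        by (rule norm_XA(1)[OF r0 i j])
      also have "\<dots> \<le> (\<Sum>l\<in>{1..n}. Bm * LA * (Mb * (cc * (T - r))^k / fact k))"
        using B[OF r0 i] Bm(1) LA0 by (intro sum_mono mult_left_mono) auto
      also have "\<dots> = ?h r" by (simp add: cc_def power_mult_distrib mult_ac)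
      finally show "norm (\<Sum>l\<in>{1..n}. pic k n T A r i l ** A r l j) \<le> ?h r" .
    qed
    also have "\<dots> = (Mb * cc ^ Suc k / fact k) * ((T - s)^(Suc k) / real (Suc k))"
      by (rule integral_unique[OF hi])
    also have "\<dots> = Mb * (cc * (T - s))^(Suc k) / fact (Suc k)"
      unfolding fact_Suc power_mult_distrib by (simp add: mult_ac del: power_Suc of_nat_Suc)
    finally show ?thesis .
  qed
  show ?case using cont bnd by blast
qed

end

lemma bbmm: "bounded_bilinear (\<lambda>(x::real^'n^'m) (y::real^'k^'n). x ** y)"
  using bil1 bilinear_conv_bounded_bilinear by blast

lemma mm_add_right: "((a::real^'n^'m) + b) ** c = a ** c + b ** (c::real^'k^'n)"
  by (simp add: vec_eq_iff matrix_matrix_mult_def distrib_right sum.distrib)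

lemma mm_add_left: "(c::real^'n^'m) ** ((a::real^'k^'n) + b) = c ** a + c ** b"
  by (simp add: vec_eq_iff matrix_matrix_mult_def distrib_left sum.distrib)

lemma sum_mmul: "(\<Sum>k\<in>K. f k) ** (B::real^'k^'n) = (\<Sum>k\<in>K. (f k :: real^'n^'m) ** B)"
  by (induction K rule: infinite_finite_induct) (simp_all add: mm_add_right)

lemma mmul_sum: "(B::real^'n^'m) ** (\<Sum>k\<in>K. f k) = (\<Sum>k\<in>K. B ** (f k :: real^'k^'n))"
  by (induction K rule: infinite_finite_induct) (simp_all add: mm_add_left)

context sys begin

definition "Sx s i j = (\<Sum>k. pic k n T A s i j)"
definition "EE = (\<Sum>k. Mb * (cc * T)^k / fact k)"

lemma Mb0: "0 \<le> Mb" using bid_norm[of 1 1] norm_ge_zero order_trans by blast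

lemma sumE: "summable (\<lambda>k. Mb * (cc * T)^k / fact k)"
  using summable_mult[OF summable_exp[of "cc * T"], of Mb] by (simp add: field_simps)

lemma pic_bnd:
  assumes s: "s\<in>{0..T}" and i: "i\<in>{1..n}" and j: "j\<in>{1..n}"
  shows "norm (pic k n T A s i j) \<le> Mb * (cc * T)^k / fact k"
proof -
  have "norm (pic k n T A s i j) \<le> Mb * (cc * (T - s))^k / fact k"
    using pic_props[of k] s i j by blast
  also have "\<dots> \<le> Mb * (cc * T)^k / fact k"
    using s cc0 Mb0 by (intro divide_right_mono mult_left_mono power_mono mult_left_mono) auto
  finally show ?thesis .
qed

lemma Sx_summable:
  assumes s: "s\<in>{0..T}" and i: "i\<in>{1..n}" and j: "j\<in>{1..n}"
  shows "summable (\<lambda>k. pic k n T A s i j)"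
  by (rule summable_comparison_test'[OF sumE, of 0]) (use pic_bnd[OF s i j] in auto)

lemma psum_bnd:
  assumes s: "s\<in>{0..T}" and i: "i\<in>{1..n}" and j: "j\<in>{1..n}"
  shows "norm (\<Sum>k<N. pic k n T A s i j) \<le> EE"
proof -
  have "norm (\<Sum>k<N. pic k n T A s i j) \<le> (\<Sum>k<N. norm (pic k n T A s i j))" by (rule norm_sum)
  also have "\<dots> \<le> (\<Sum>k<N. Mb * (cc * T)^k / fact k)" by (rule sum_mono) (rule pic_bnd[OF s i j])
  also have "\<dots> \<le> EE" unfolding EE_def
    by (rule sum_le_suminf[OF sumE]) (use Mb0 cc0 Tpos in auto)
  finally show ?thesis .
qed

lemma Sx_bnd:
  assumes s: "s\<in>{0..T}" and i: "i\<in>{1..n}" and j: "j\<in>{1..n}"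
  shows "norm (Sx s i j) \<le> EE"
  unfolding Sx_def EE_def by (rule norm_suminf_le[OF pic_bnd[OF s i j] sumE])

lemma pic_cont: "i\<in>{1..n} \<Longrightarrow> j\<in>{1..n} \<Longrightarrow> continuous_on {0..T} (\<lambda>s. pic k n T A s i j)"
  using pic_props[of k] by blast

lemma psum_cont: "i\<in>{1..n} \<Longrightarrow> j\<in>{1..n} \<Longrightarrow> continuous_on {0..T} (\<lambda>s. \<Sum>k<N. pic k n T A s i j)"
  by (intro continuous_on_sum) (auto intro: pic_cont)

lemma psum_eq:
  assumes s: "s\<in>{0..T}" and i: "i\<in>{1..n}" and j: "j\<in>{1..n}"
  shows "(\<Sum>k<Suc N. pic k n T A s i j) = bid i j + integral {s..T} (\<lambda>r. \<Sum>l\<in>{1..n}. (\<Sum>k<N. pic k n T A r i l) ** A r l j)"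
proof -
  have int: "(\<lambda>r. \<Sum>l\<in>{1..n}. pic k n T A r i l ** A r l j) integrable_on {s..T}" for k
    by (rule int_XA(1)[OF pic_cont i j]) (use s in auto)
  have "(\<Sum>k<Suc N. pic k n T A s i j) = bid i j + (\<Sum>k<N. pic (Suc k) n T A s i j)"
    unfolding sum.lessThan_Suc_shift by simp
  also have "(\<Sum>k<N. pic (Suc k) n T A s i j) = (\<Sum>k<N. integral {s..T} (\<lambda>r. \<Sum>l\<in>{1..n}. pic k n T A r i l ** A r l j))"
    by simp
  also have "\<dots> = integral {s..T} (\<lambda>r. \<Sum>k<N. \<Sum>l\<in>{1..n}. pic k n T A r i l ** A r l j)"
    by (rule integral_sum[symmetric]) (use int in auto)
  also have "\<dots> = integral {s..T} (\<lambda>r. \<Sum>l\<in>{1..n}. (\<Sum>k<N. pic k n T A r i l) ** A r l j)"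
    by (simp add: sum_mmul sum.swap[of _ "{..<N}"])
  finally show ?thesis .
qed

lemma Sx_eq:
  assumes s: "s\<in>{0..T}" and i: "i\<in>{1..n}" and j: "j\<in>{1..n}"
  shows "(\<lambda>r. \<Sum>l\<in>{1..n}. Sx r i l ** A r l j) integrable_on {s..T}"
    and "Sx s i j = bid i j + integral {s..T} (\<lambda>r. \<Sum>l\<in>{1..n}. Sx r i l ** A r l j)"
proof -
  define f where "f N r = (\<Sum>l\<in>{1..n}. (\<Sum>k<N. pic k n T A r i l) ** A r l j)" for N r
  have fi: "f N integrable_on {s..T}" for N
    unfolding f_def by (rule int_XA(1)[OF psum_cont i j]) (use s in auto)
  have hi: "(\<lambda>r. real n * (Bm * LA * EE)) integrable_on {s..T}" by (rule integrable_const_ivl)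
  have fb: "norm (f N r) \<le> real n * (Bm * LA * EE)" if r: "r \<in> {s..T}" for N r
  proof -
    have r0: "r \<in> {0..T}" using r s by auto
    have "norm (f N r) \<le> (\<Sum>l\<in>{1..n}. Bm * LA * norm (\<Sum>k<N. pic k n T A r i l))"
      unfolding f_def by (rule norm_XA(1)[OF r0 i j])
    also have "\<dots> \<le> (\<Sum>l\<in>{1..n}. Bm * LA * EE)"
      using psum_bnd[OF r0 i] Bm(1) LA0 by (intro sum_mono mult_left_mono) auto
    finally show ?thesis by simp
  qed
  have fc: "(\<lambda>N. f N r) \<longlonglongrightarrow> (\<Sum>l\<in>{1..n}. Sx r i l ** A r l j)" if r: "r \<in> {s..T}" for r
  proof -
    have r0: "r \<in> {0..T}" using r s by auto
    have "(\<lambda>N. \<Sum>k<N. pic k n T A r i l) \<longlonglongrightarrow> Sx r i l" if l: "l \<in> {1..n}" for l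
      unfolding Sx_def by (rule summable_LIMSEQ[OF Sx_summable[OF r0 i l]])
    then show ?thesis unfolding f_def
      by (intro tendsto_sum bounded_bilinear.tendsto[OF bbmm] tendsto_const) auto
  qed
  have dc: "(\<lambda>r. \<Sum>l\<in>{1..n}. Sx r i l ** A r l j) integrable_on {s..T}"
    "(\<lambda>N. integral {s..T} (f N)) \<longlonglongrightarrow> integral {s..T} (\<lambda>r. \<Sum>l\<in>{1..n}. Sx r i l ** A r l j)"
    using dominated_convergence[OF fi hi fb fc] by auto
  then show "(\<lambda>r. \<Sum>l\<in>{1..n}. Sx r i l ** A r l j) integrable_on {s..T}" by simp
  have "(\<lambda>N. \<Sum>k<Suc N. pic k n T A s i j) \<longlonglongrightarrow> Sx s i j"
    unfolding Sx_def using LIMSEQ_Suc[OF summable_LIMSEQ[OF Sx_summable[OF s i j]]] by simp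
  moreover have "(\<lambda>N. \<Sum>k<Suc N. pic k n T A s i j) \<longlonglongrightarrow> bid i j + integral {s..T} (\<lambda>r. \<Sum>l\<in>{1..n}. Sx r i l ** A r l j)"
    unfolding psum_eq[OF s i j] f_def[symmetric] by (intro tendsto_add tendsto_const dc(2))
  ultimately show "Sx s i j = bid i j + integral {s..T} (\<lambda>r. \<Sum>l\<in>{1..n}. Sx r i l ** A r l j)"
    by (rule LIMSEQ_unique)
qed

lemma Sx_cont:
  assumes i: "i\<in>{1..n}" and j: "j\<in>{1..n}"
  shows "continuous_on {0..T} (\<lambda>s. Sx s i j)"
proof -
  have "continuous_on {0..T} (\<lambda>s. bid i j + integral {s..T} (\<lambda>r. \<Sum>l\<in>{1..n}. Sx r i l ** A r l j))"
    by (intro continuous_intros indefinite_integral_continuous_1' Sx_eq(1)[OF _ i j]) (use Tpos in auto)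
  then show ?thesis
    by (rule continuous_on_eq) (use Sx_eq(2)[OF _ i j] in auto)
qed

end

lemma mm_diff_right: "((a::real^'n^'m) - b) ** c = a ** c - b ** (c::real^'k^'n)"
  by (simp add: vec_eq_iff matrix_matrix_mult_def left_diff_distrib sum_subtractf)

lemma mm_diff_left: "(c::real^'n^'m) ** ((a::real^'k^'n) - b) = c ** a - c ** b"
  by (simp add: vec_eq_iff matrix_matrix_mult_def right_diff_distrib sum_subtractf)

lemma bl_left: "bounded_linear (\<lambda>x::real^'n^'m. x ** (c::real^'k^'n))"
  by (rule bounded_bilinear.bounded_linear_left[OF bbmm])

lemma bl_right: "bounded_linear (\<lambda>x::real^'k^'n. (c::real^'n^'m) ** x)"
  by (rule bounded_bilinear.bounded_linear_right[OF bbmm])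

lemma incr:
  fixes X Y F H :: "real \<Rightarrow> 'd::finite bmat"
  assumes Fi: "\<And>i j. i\<in>{1..n} \<Longrightarrow> j\<in>{1..n} \<Longrightarrow> (\<lambda>r. F r i j) integrable_on {0..T}"
    and Hi: "\<And>i j. i\<in>{1..n} \<Longrightarrow> j\<in>{1..n} \<Longrightarrow> (\<lambda>r. H r i j) integrable_on {0..T}"
    and Xe: "\<And>s i j. s\<in>{0..T} \<Longrightarrow> i\<in>{1..n} \<Longrightarrow> j\<in>{1..n} \<Longrightarrow> X s i j = X T i j - integral {s..T} (\<lambda>r. F r i j)"
    and Ye: "\<And>s i j. s\<in>{0..T} \<Longrightarrow> i\<in>{1..n} \<Longrightarrow> j\<in>{1..n} \<Longrightarrow> Y s i j = Y T i j - integral {s..T} (\<lambda>r. H r i j)"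
    and Pi: "(\<lambda>r. \<Sum>k\<in>{1..n}. F r i k ** Y r k j + X r i k ** H r k j) integrable_on {0..T}"
    and i: "i\<in>{1..n}" and j: "j\<in>{1..n}" and ab: "0 \<le> a" "a \<le> b" "b \<le> T"
  shows "((\<lambda>r. \<Sum>k\<in>{1..n}. F r i k ** (Y b k j - Y r k j) + (X a i k - X r i k) ** H r k j) has_integral
        ((bmul n (X b) (Y b) i j + integral {b..T} (\<lambda>r. \<Sum>k\<in>{1..n}. F r i k ** Y r k j + X r i k ** H r k j))
         - (bmul n (X a) (Y a) i j + integral {a..T} (\<lambda>r. \<Sum>k\<in>{1..n}. F r i k ** Y r k j + X r i k ** H r k j)))) {a..b}"
proof -
  let ?P = "\<lambda>r. \<Sum>k\<in>{1..n}. F r i k ** Y r k j + X r i k ** H r k j"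
  have a0: "a \<in> {0..T}" and b0: "b \<in> {0..T}" using ab by auto
  have comb: "integral {a..b} f = integral {a..T} f - integral {b..T} f" if "f integrable_on {0..T}" for f :: "real \<Rightarrow> real^'d^'d"
  proof -
    have "f integrable_on {a..T}" by (rule integrable_on_subinterval[OF that]) (use ab in auto)
    from Henstock_Kurzweil_Integration.integral_combine[OF ab(2) ab(3) this] show ?thesis by (simp add: algebra_simps)
  qed
  have dX: "((\<lambda>r. F r i k) has_integral (X b i k - X a i k)) {a..b}" if k: "k \<in> {1..n}" for k
  proof -
    have "(\<lambda>r. F r i k) integrable_on {a..b}" by (rule integrable_on_subinterval[OF Fi[OF i k]]) (use ab in auto)
    moreover have "X b i k - X a i k = integral {a..b} (\<lambda>r. F r i k)"
      using Xe[OF a0 i k] Xe[OF b0 i k] comb[OF Fi[OF i k]] by simp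
    ultimately show ?thesis by (simp add: integrable_integral)
  qed
  have dY: "((\<lambda>r. H r k j) has_integral (Y b k j - Y a k j)) {a..b}" if k: "k \<in> {1..n}" for k
  proof -
    have "(\<lambda>r. H r k j) integrable_on {a..b}" by (rule integrable_on_subinterval[OF Hi[OF k j]]) (use ab in auto)
    moreover have "Y b k j - Y a k j = integral {a..b} (\<lambda>r. H r k j)"
      using Ye[OF a0 k j] Ye[OF b0 k j] comb[OF Hi[OF k j]] by simp
    ultimately show ?thesis by (simp add: integrable_integral)
  qed
  have S: "((\<lambda>r. \<Sum>k\<in>{1..n}. F r i k ** Y b k j + X a i k ** H r k j) has_integral
      (\<Sum>k\<in>{1..n}. (X b i k - X a i k) ** Y b k j + X a i k ** (Y b k j - Y a k j))) {a..b}"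
  proof (rule has_integral_sum)
    fix k assume k: "k \<in> {1..n}"
    show "((\<lambda>r. F r i k ** Y b k j + X a i k ** H r k j) has_integral
      ((X b i k - X a i k) ** Y b k j + X a i k ** (Y b k j - Y a k j))) {a..b}"
      by (intro has_integral_add has_integral_linear[OF dX[OF k] bl_left, unfolded o_def]
          has_integral_linear[OF dY[OF k] bl_right, unfolded o_def])
  qed simp
  have Pab: "(?P has_integral integral {a..b} ?P) {a..b}"
    by (rule integrable_integral, rule integrable_on_subinterval[OF Pi]) (use ab in auto)
  have D: "((\<lambda>r. (\<Sum>k\<in>{1..n}. F r i k ** Y b k j + X a i k ** H r k j) - ?P r) has_integral
      ((\<Sum>k\<in>{1..n}. (X b i k - X a i k) ** Y b k j + X a i k ** (Y b k j - Y a k j)) - integral {a..b} ?P)) {a..b}"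
    by (rule has_integral_diff[OF S Pab])
  have val: "(\<Sum>k\<in>{1..n}. (X b i k - X a i k) ** Y b k j + X a i k ** (Y b k j - Y a k j)) - integral {a..b} ?P
     = (bmul n (X b) (Y b) i j + integral {b..T} ?P) - (bmul n (X a) (Y a) i j + integral {a..T} ?P)"
    unfolding comb[OF Pi] bmul_def by (simp add: mm_diff_right mm_diff_left sum_subtractf algebra_simps)
  have fn1: "(\<Sum>k\<in>{1..n}. F r i k ** Y b k j + X a i k ** H r k j) - ?P r
      = (\<Sum>k\<in>{1..n}. F r i k ** (Y b k j - Y r k j) + (X a i k - X r i k) ** H r k j)" for r
    by (simp add: mm_diff_right mm_diff_left sum_subtractf[symmetric] algebra_simps)
  show ?thesis using D unfolding val fn1 .
qed

lemma prod_rule: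
  fixes X Y F H :: "real \<Rightarrow> 'd::finite bmat"
  assumes Bm: "\<And>(x::real^'d^'d) (y::real^'d^'d). norm (x ** y) \<le> Bm * norm x * norm y" "0 \<le> Bm"
    and LF: "0 \<le> LF" and T: "0 \<le> T"
    and Xc: "\<And>i j. i\<in>{1..n} \<Longrightarrow> j\<in>{1..n} \<Longrightarrow> continuous_on {0..T} (\<lambda>s. X s i j)"
    and Yc: "\<And>i j. i\<in>{1..n} \<Longrightarrow> j\<in>{1..n} \<Longrightarrow> continuous_on {0..T} (\<lambda>s. Y s i j)"
    and Fb: "\<And>s i j. s\<in>{0..T} \<Longrightarrow> i\<in>{1..n} \<Longrightarrow> j\<in>{1..n} \<Longrightarrow> norm (F s i j) \<le> LF"
    and Hb: "\<And>s i j. s\<in>{0..T} \<Longrightarrow> i\<in>{1..n} \<Longrightarrow> j\<in>{1..n} \<Longrightarrow> norm (H s i j) \<le> LF"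
    and Fi: "\<And>i j. i\<in>{1..n} \<Longrightarrow> j\<in>{1..n} \<Longrightarrow> (\<lambda>r. F r i j) integrable_on {0..T}"
    and Hi: "\<And>i j. i\<in>{1..n} \<Longrightarrow> j\<in>{1..n} \<Longrightarrow> (\<lambda>r. H r i j) integrable_on {0..T}"
    and Xe: "\<And>s i j. s\<in>{0..T} \<Longrightarrow> i\<in>{1..n} \<Longrightarrow> j\<in>{1..n} \<Longrightarrow> X s i j = X T i j - integral {s..T} (\<lambda>r. F r i j)"
    and Ye: "\<And>s i j. s\<in>{0..T} \<Longrightarrow> i\<in>{1..n} \<Longrightarrow> j\<in>{1..n} \<Longrightarrow> Y s i j = Y T i j - integral {s..T} (\<lambda>r. H r i j)"
    and Pi: "\<And>i j. i\<in>{1..n} \<Longrightarrow> j\<in>{1..n} \<Longrightarrow> (\<lambda>r. \<Sum>k\<in>{1..n}. F r i k ** Y r k j + X r i k ** H r k j) integrable_on {0..T}"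
    and s: "s\<in>{0..T}" and i: "i\<in>{1..n}" and j: "j\<in>{1..n}"
  shows "bmul n (X s) (Y s) i j = bmul n (X T) (Y T) i j - integral {s..T} (\<lambda>r. \<Sum>k\<in>{1..n}. F r i k ** Y r k j + X r i k ** H r k j)"
proof -
  define P where "P s = bmul n (X s) (Y s) i j + integral {s..T} (\<lambda>r. \<Sum>k\<in>{1..n}. F r i k ** Y r k j + X r i k ** H r k j)" for s
  have deriv: "(P has_derivative (\<lambda>h. 0)) (at x within {0..T})" if x: "x \<in> {0..T}" for x
    unfolding has_derivative_within_alt
  proof (intro conjI allI impI bounded_linear_zero)
    fix e :: real assume e: "0 < e"
    define \<eta> where "\<eta> = e / (4 * real n * Bm * LF + 1)"
    have eta: "0 < \<eta>" unfolding \<eta>_def using e Bm(2) LF by (intro divide_pos_pos) (auto intro!: add_nonneg_pos)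
    have "4 * real n * Bm * LF * \<eta> \<le> e"
    proof -
      have "4 * real n * Bm * LF * \<eta> \<le> (4 * real n * Bm * LF + 1) * \<eta>" using eta by simp
      also have "\<dots> = e"
      proof -
        have "4 * real n * Bm * LF + 1 > 0" using Bm(2) LF by (intro add_nonneg_pos) auto
        then show ?thesis unfolding \<eta>_def by simp
      qed
      finally show ?thesis .
    qed
    note eta_e = this
    have "\<exists>d>0. \<forall>k\<in>{1..n}. \<forall>d'. 0 < d' \<and> d' \<le> d \<longrightarrow>
        (\<forall>x'\<in>{0..T}. dist x' x < d' \<longrightarrow> norm (X x' i k - X x i k) < \<eta> \<and> norm (Y x' k j - Y x k j) < \<eta>)"
    proof (rule fin_delta)
      fix k assume k: "k \<in> {1..n}"
      obtain d1 where d1: "d1 > 0" "\<forall>x'\<in>{0..T}. dist x' x < d1 \<longrightarrow> dist (X x' i k) (X x i k) < \<eta>"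
        using Xc[OF i k] x eta unfolding continuous_on_iff by blast
      obtain d2 where d2: "d2 > 0" "\<forall>x'\<in>{0..T}. dist x' x < d2 \<longrightarrow> dist (Y x' k j) (Y x k j) < \<eta>"
        using Yc[OF k j] x eta unfolding continuous_on_iff by blast
      show "\<exists>d>0. \<forall>d'. 0 < d' \<and> d' \<le> d \<longrightarrow>
        (\<forall>x'\<in>{0..T}. dist x' x < d' \<longrightarrow> norm (X x' i k - X x i k) < \<eta> \<and> norm (Y x' k j - Y x k j) < \<eta>)"
        using d1 d2 by (intro exI[of _ "min d1 d2"]) (auto simp: dist_norm)
    qed simp
    then obtain d where d: "d > 0" and dk: "\<And>k x'. k\<in>{1..n} \<Longrightarrow> x'\<in>{0..T} \<Longrightarrow> dist x' x < d \<Longrightarrow>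
        norm (X x' i k - X x i k) < \<eta> \<and> norm (Y x' k j - Y x k j) < \<eta>"
      by blast
    show "\<exists>d>0. \<forall>y\<in>{0..T}. norm (y - x) < d \<longrightarrow> norm (P y - P x - 0) \<le> e * norm (y - x)"
    proof (intro exI[of _ d] conjI d ballI impI)
      fix y assume y: "y \<in> {0..T}" and yd: "norm (y - x) < d"
      define a where "a = min x y"
      define b where "b = max x y"
      have ab: "0 \<le> a" "a \<le> b" "b \<le> T" using x y unfolding a_def b_def by auto
      have hi: "((\<lambda>r. \<Sum>k\<in>{1..n}. F r i k ** (Y b k j - Y r k j) + (X a i k - X r i k) ** H r k j) has_integral
        (P b - P a)) {a..b}"
        unfolding P_def by (rule incr[where X=X and Y=Y and F=F and H=H and n=n and T=T and i=i and j=j, OF Fi Hi Xe Ye Pi[OF i j] i j ab])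
      have near: "r \<in> {0..T} \<and> dist r x < d" if "r \<in> {a..b}" for r
        using that yd x y unfolding a_def b_def by (auto simp: dist_norm)
      have a0: "a \<in> {a..b}" and b0: "b \<in> {a..b}" using ab by auto
      have bnd: "norm (\<Sum>k\<in>{1..n}. F r i k ** (Y b k j - Y r k j) + (X a i k - X r i k) ** H r k j) \<le> e"
        if r: "r \<in> {a..b} - {}" for r
      proof -
        have rr: "r \<in> {0..T}" "dist r x < d" using near r by auto
        have "norm (\<Sum>k\<in>{1..n}. F r i k ** (Y b k j - Y r k j) + (X a i k - X r i k) ** H r k j)
          \<le> (\<Sum>k\<in>{1..n}. norm (F r i k ** (Y b k j - Y r k j) + (X a i k - X r i k) ** H r k j))"
          by (rule norm_sum)
        also have "\<dots> \<le> (\<Sum>k\<in>{1..n}. 4 * Bm * LF * \<eta>)"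
        proof (rule sum_mono)
          fix k assume k: "k \<in> {1..n}"
          have e1: "norm (Y b k j - Y r k j) \<le> 2 * \<eta>"
          proof -
            have "norm (Y b k j - Y r k j) \<le> norm (Y b k j - Y x k j) + norm (Y r k j - Y x k j)"
              using norm_triangle_ineq4[of "Y b k j - Y x k j" "Y r k j - Y x k j"] by simp
            then show ?thesis using dk[OF k, of b] dk[OF k, of r] near[OF b0] rr by linarith
          qed
          have e2: "norm (X a i k - X r i k) \<le> 2 * \<eta>"
          proof -
            have "norm (X a i k - X r i k) \<le> norm (X a i k - X x i k) + norm (X r i k - X x i k)"
              using norm_triangle_ineq4[of "X a i k - X x i k" "X r i k - X x i k"] by simp
            then show ?thesis using dk[OF k, of a] dk[OF k, of r] near[OF a0] rr by linarith
          qed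
          have "norm (F r i k ** (Y b k j - Y r k j)) \<le> Bm * norm (F r i k) * norm (Y b k j - Y r k j)" by (rule Bm(1))
          also have "\<dots> \<le> Bm * LF * (2 * \<eta>)"
            using Fb[OF rr(1) i k] e1 Bm(2) LF by (intro mult_mono mult_left_mono) auto
          finally have t1: "norm (F r i k ** (Y b k j - Y r k j)) \<le> Bm * LF * (2 * \<eta>)" .
          have "norm ((X a i k - X r i k) ** H r k j) \<le> Bm * norm (X a i k - X r i k) * norm (H r k j)" by (rule Bm(1))
          also have "\<dots> \<le> Bm * (2 * \<eta>) * LF"
            using Hb[OF rr(1) k j] e2 Bm(2) LF eta by (intro mult_mono mult_left_mono) auto
          finally have t2: "norm ((X a i k - X r i k) ** H r k j) \<le> Bm * (2 * \<eta>) * LF" .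
          show "norm (F r i k ** (Y b k j - Y r k j) + (X a i k - X r i k) ** H r k j) \<le> 4 * Bm * LF * \<eta>"
            using norm_triangle_ineq[of "F r i k ** (Y b k j - Y r k j)" "(X a i k - X r i k) ** H r k j"] t1 t2
            by (simp add: algebra_simps)
        qed
        also have "\<dots> = 4 * real n * Bm * LF * \<eta>" by simp
        also have "\<dots> \<le> e" by (rule eta_e)
        finally show ?thesis .
      qed
      have "norm (P b - P a) \<le> e * (b - a)"
        using has_integral_bound_real[OF _ _ hi bnd, of "{}"] e ab by (simp add: content_real_if)
      moreover have "norm (P y - P x) = norm (P b - P a)"
        unfolding a_def b_def by (cases "x \<le> y") (simp_all add: max_def min_def norm_minus_commute)
      moreover have "b - a = norm (y - x)"
        unfolding a_def b_def by (cases "x \<le> y") (simp_all add: max_def min_def)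
      ultimately show "norm (P y - P x - 0) \<le> e * norm (y - x)" by simp
    qed
  qed
  obtain c where c: "\<forall>x\<in>{0..T}. P x = c"
    using has_derivative_zero_constant[OF convex_real_interval(5) deriv] by blast
  then have "P s = P T" using s T by auto
  then show ?thesis unfolding P_def by (simp add: algebra_simps)
qed

lemma gronwall0:
  fixes \<phi> :: "real \<Rightarrow> real"
  assumes cont: "continuous_on {0..T} \<phi>" and nn: "\<And>s. s\<in>{0..T} \<Longrightarrow> 0 \<le> \<phi> s"
    and c: "0 \<le> c"
    and ineq: "\<And>s. s\<in>{0..T} \<Longrightarrow> \<phi> s \<le> c * integral {s..T} \<phi>"
    and s: "s \<in> {0..T}"
  shows "\<phi> s = 0"
proof -
  obtain M where M: "\<And>s. s\<in>{0..T} \<Longrightarrow> norm (\<phi> s) \<le> M" using cont_bound[OF cont] by blast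
  have M0: "0 \<le> M" using M[OF s] norm_ge_zero order_trans by blast
  have P: "\<forall>s\<in>{0..T}. \<phi> s \<le> M * (c * (T - s))^k / fact k" for k
  proof (induction k)
    case 0
    show ?case using M by (force simp: abs_le_iff)
  next
    case (Suc k)
    show ?case
    proof
      fix s assume s: "s \<in> {0..T}"
      let ?h = "\<lambda>r. (M * c ^ k / fact k) * (T - r)^k"
      have hi: "(?h has_integral (M * c ^ k / fact k) * ((T - s)^(Suc k) / real (Suc k))) {s..T}"
        by (rule has_integral_mult_right[OF poly_int]) (use s in auto)
      have phii: "(\<phi> has_integral integral {s..T} \<phi>) {s..T}"
        by (rule integrable_integral, rule integrable_continuous_interval, rule continuous_on_subset[OF cont])
           (use s in auto)
      have "integral {s..T} \<phi> \<le> (M * c ^ k / fact k) * ((T - s)^(Suc k) / real (Suc k))"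
      proof (rule has_integral_le[OF phii hi])
        fix r assume r: "r \<in> {s..T}"
        then have "r \<in> {0..T}" using s by auto
        then have "\<phi> r \<le> M * (c * (T - r))^k / fact k" using Suc.IH by blast
        then show "\<phi> r \<le> ?h r" by (simp add: power_mult_distrib)
      qed
      then have "c * integral {s..T} \<phi> \<le> c * ((M * c ^ k / fact k) * ((T - s)^(Suc k) / real (Suc k)))"
        using c by (rule mult_left_mono)
      also have "\<dots> = M * (c * (T - s))^(Suc k) / fact (Suc k)"
        unfolding fact_Suc power_mult_distrib power_Suc[of c] by (simp add: mult_ac del: power_Suc of_nat_Suc)
      finally show "\<phi> s \<le> M * (c * (T - s))^(Suc k) / fact (Suc k)" using ineq[OF s] by linarith
    qed
  qed
  have "(\<lambda>k. inverse (fact k) * (c * (T - s))^k) \<longlonglongrightarrow> 0"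
    by (rule summable_LIMSEQ_zero[OF summable_exp])
  then have "(\<lambda>k. M * (inverse (fact k) * (c * (T - s))^k)) \<longlonglongrightarrow> M * 0"
    by (intro tendsto_mult tendsto_const)
  then have lim: "(\<lambda>k. M * (c * (T - s))^k / fact k) \<longlonglongrightarrow> 0" by (simp add: field_simps)
  have "\<phi> s \<le> 0"
    by (rule LIMSEQ_le_const[OF lim]) (use P s in auto)
  then show ?thesis using nn[OF s] by simp
qed

lemma bmul_bid_left:
  assumes i: "i \<in> {1..n}"
  shows "bmul n bid Y i j = (Y i j :: real^'d::finite^'d)"
proof -
  have "bmul n bid Y i j = (\<Sum>k\<in>{1..n}. if i = k then Y k j else 0)"
    unfolding bmul_def bid_def by (intro sum.cong) auto
  also have "\<dots> = Y i j" using i by simp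
  finally show ?thesis .
qed

lemma bmul_bid_right:
  assumes j: "j \<in> {1..n}"
  shows "bmul n Y bid i j = (Y i j :: real^'d::finite^'d)"
proof -
  have "bmul n Y bid i j = (\<Sum>k\<in>{1..n}. if k = j then Y i k else 0)"
    unfolding bmul_def bid_def by (intro sum.cong) auto
  also have "\<dots> = Y i j" using j by simp
  finally show ?thesis .
qed

lemma mm_neg_right: "(- (a::real^'n^'m)) ** (c::real^'k^'n) = - (a ** c)"
  by (simp add: vec_eq_iff matrix_matrix_mult_def sum_negf)

lemma mm_neg_left: "(c::real^'n^'m) ** (- (a::real^'k^'n)) = - (c ** a)"
  by (simp add: vec_eq_iff matrix_matrix_mult_def sum_negf)

locale res = sys n T LA Bm Mb A for n T LA Bm Mb and A :: "real \<Rightarrow> 'd::finite bmat" +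
  fixes R :: "real \<Rightarrow> 'd bmat"
  assumes resolvent: "\<And>s i j. s\<in>{0..T} \<Longrightarrow> i\<in>{1..n} \<Longrightarrow> j\<in>{1..n} \<Longrightarrow>
     ((\<lambda>r. \<Sum>k\<in>{1..n}. A r i k ** R r k j) has_integral (bid i j - R s i j)) {s..T}"
    and Astruct: "\<And>s i j. s \<in> {0..T} \<Longrightarrow> i \<in> {1..n} \<Longrightarrow> j \<in> {1..n} \<Longrightarrow> j + 1 < i \<Longrightarrow> A s i j = 0"
begin

lemma R_eq: "s\<in>{0..T} \<Longrightarrow> i\<in>{1..n} \<Longrightarrow> j\<in>{1..n} \<Longrightarrow>
    R s i j = bid i j - integral {s..T} (\<lambda>r. \<Sum>k\<in>{1..n}. A r i k ** R r k j)"
proof -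
  assume s: "s\<in>{0..T}" and i: "i\<in>{1..n}" and j: "j\<in>{1..n}"
  show ?thesis using integral_unique[OF resolvent[OF s i j]] by (simp add: algebra_simps)
qed

lemma R_T: "i\<in>{1..n} \<Longrightarrow> j\<in>{1..n} \<Longrightarrow> R T i j = bid i j"
  using R_eq[of T] Tpos by simp

lemma R_int: "i\<in>{1..n} \<Longrightarrow> j\<in>{1..n} \<Longrightarrow> (\<lambda>r. \<Sum>k\<in>{1..n}. A r i k ** R r k j) integrable_on {0..T}"
  using resolvent[of 0] Tpos by (auto simp: integrable_on_def)

lemma R_cont: "i\<in>{1..n} \<Longrightarrow> j\<in>{1..n} \<Longrightarrow> continuous_on {0..T} (\<lambda>s. R s i j)"
proof -
  assume i: "i\<in>{1..n}" and j: "j\<in>{1..n}"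
  have "continuous_on {0..T} (\<lambda>s. bid i j - integral {s..T} (\<lambda>r. \<Sum>k\<in>{1..n}. A r i k ** R r k j))"
    by (intro continuous_intros indefinite_integral_continuous_1' R_int[OF i j])
  then show ?thesis by (rule continuous_on_eq) (use R_eq i j in auto)
qed

lemma R_bnd: "\<exists>K\<ge>0. \<forall>s\<in>{0..T}. \<forall>i\<in>{1..n}. \<forall>j\<in>{1..n}. norm (R s i j) \<le> K"
proof -
  have "\<exists>K. \<forall>s\<in>{0..T}. \<forall>i\<in>{1..n}. \<forall>j\<in>{1..n}. norm (R s i j) \<le> K"
    by (rule fin_bound[OF cont_bound[OF R_cont]]) auto
  then obtain K where K: "\<forall>s\<in>{0..T}. \<forall>i\<in>{1..n}. \<forall>j\<in>{1..n}. norm (R s i j) \<le> K" by blast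
  show ?thesis
  proof (intro exI[of _ "max K 0"] conjI ballI)
    fix s i j assume "s\<in>{0..T}" "i\<in>{1..n}" "j\<in>{1..n}"
    then have "norm (R s i j) \<le> K" using K by blast
    then show "norm (R s i j) \<le> max K 0" by linarith
  qed simp
qed

lemma Sx_T: "i\<in>{1..n} \<Longrightarrow> j\<in>{1..n} \<Longrightarrow> Sx T i j = bid i j"
proof -
  assume i: "i\<in>{1..n}" and j: "j\<in>{1..n}"
  have T: "T \<in> {0..T}" using Tpos by simp
  show ?thesis using Sx_eq(2)[OF T i j] by simp
qed

lemma Sx_eq2: "s\<in>{0..T} \<Longrightarrow> i\<in>{1..n} \<Longrightarrow> j\<in>{1..n} \<Longrightarrow>
    Sx s i j = Sx T i j - integral {s..T} (\<lambda>r. - (\<Sum>l\<in>{1..n}. Sx r i l ** A r l j))"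
proof -
  assume s: "s\<in>{0..T}" and i: "i\<in>{1..n}" and j: "j\<in>{1..n}"
  show ?thesis using Sx_eq(2)[OF s i j] Sx_T[OF i j] by simp
qed

lemma R_eq2: "s\<in>{0..T} \<Longrightarrow> i\<in>{1..n} \<Longrightarrow> j\<in>{1..n} \<Longrightarrow>
    R s i j = R T i j - integral {s..T} (\<lambda>r. \<Sum>k\<in>{1..n}. A r i k ** R r k j)"
proof -
  assume s: "s\<in>{0..T}" and i: "i\<in>{1..n}" and j: "j\<in>{1..n}"
  show ?thesis using R_eq[OF s i j] R_T[OF i j] by simp
qed

lemma EE0: "0 \<le> EE"
  unfolding EE_def by (rule suminf_nonneg[OF sumE]) (use Mb0 cc0 Tpos in auto)

lemma SR: assumes s: "s\<in>{0..T}" and i: "i\<in>{1..n}" and j: "j\<in>{1..n}"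
  shows "bmul n (Sx s) (R s) i j = bid i j"
proof -
  obtain KR where KR0: "KR \<ge> 0" and KR: "\<And>s i j. s\<in>{0..T} \<Longrightarrow> i\<in>{1..n} \<Longrightarrow> j\<in>{1..n} \<Longrightarrow> norm (R s i j) \<le> KR"
    using R_bnd by blast
  define LF where "LF = real n * Bm * LA * (EE + KR)"
  have LF0: "0 \<le> LF" unfolding LF_def using Bm(1) LA0 EE0 KR0 by simp
  have zero: "(\<Sum>k\<in>{1..n}. (- (\<Sum>l\<in>{1..n}. Sx r i l ** A r l k)) ** R r k j + Sx r i k ** (\<Sum>l\<in>{1..n}. A r k l ** R r l j)) = 0"
    for r i j
  proof -
    have "(\<Sum>k\<in>{1..n}. (\<Sum>l\<in>{1..n}. Sx r i l ** A r l k) ** R r k j) = (\<Sum>k\<in>{1..n}. Sx r i k ** (\<Sum>l\<in>{1..n}. A r k l ** R r l j))"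
      by (simp add: sum_mmul mmul_sum matrix_mul_assoc) (rule sum.swap)
    then show ?thesis by (simp add: mm_neg_right sum.distrib sum_negf sum_subtractf)
  qed
  have "bmul n (Sx s) (R s) i j = bmul n (Sx T) (R T) i j - integral {s..T} (\<lambda>r. \<Sum>k\<in>{1..n}. (- (\<Sum>l\<in>{1..n}. Sx r i l ** A r l k)) ** R r k j + Sx r i k ** (\<Sum>l\<in>{1..n}. A r k l ** R r l j))"
  proof (rule prod_rule[where F="\<lambda>r i j. - (\<Sum>l\<in>{1..n}. Sx r i l ** A r l j)" and H="\<lambda>r i j. \<Sum>l\<in>{1..n}. A r i l ** R r l j" and LF=LF, OF Bm(2) _ LF0])
    show "0 \<le> Bm" using Bm(1) by simp
    show "0 \<le> T" using Tpos by simp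
    show "continuous_on {0..T} (\<lambda>s. Sx s i j)" if "i\<in>{1..n}" "j\<in>{1..n}" for i j using Sx_cont that .
    show "continuous_on {0..T} (\<lambda>s. R s i j)" if "i\<in>{1..n}" "j\<in>{1..n}" for i j using R_cont that .
    show "norm (- (\<Sum>l\<in>{1..n}. Sx r i l ** A r l j)) \<le> LF" if "r\<in>{0..T}" "i\<in>{1..n}" "j\<in>{1..n}" for r i j
    proof -
      have "norm (- (\<Sum>l\<in>{1..n}. Sx r i l ** A r l j)) \<le> (\<Sum>l\<in>{1..n}. Bm * LA * norm (Sx r i l))"
        using norm_XA(1)[OF that] by simp
      also have "\<dots> \<le> (\<Sum>l\<in>{1..n}. Bm * LA * (EE + KR))"
        using Sx_bnd[OF that(1,2)] Bm(1) LA0 KR0 by (intro sum_mono mult_left_mono) (auto simp: add_increasing2)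
      finally show ?thesis unfolding LF_def by (simp add: mult_ac)
    qed
    show "norm (\<Sum>l\<in>{1..n}. A r i l ** R r l j) \<le> LF" if "r\<in>{0..T}" "i\<in>{1..n}" "j\<in>{1..n}" for r i j
    proof -
      have "norm (\<Sum>l\<in>{1..n}. A r i l ** R r l j) \<le> (\<Sum>l\<in>{1..n}. Bm * LA * norm (R r l j))"
        using norm_XA(2)[OF that] by simp
      also have "\<dots> \<le> (\<Sum>l\<in>{1..n}. Bm * LA * (EE + KR))"
        using KR[OF that(1) _ that(3)] Bm(1) LA0 EE0 by (intro sum_mono mult_left_mono) (auto simp: add_increasing)
      finally show ?thesis unfolding LF_def by (simp add: mult_ac)
    qed
    show "(\<lambda>r. - (\<Sum>l\<in>{1..n}. Sx r i l ** A r l j)) integrable_on {0..T}" if "i\<in>{1..n}" "j\<in>{1..n}" for i j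
      by (intro integrable_neg int_XA(1)[OF Sx_cont that]) (use Tpos in auto)
    show "(\<lambda>r. \<Sum>l\<in>{1..n}. A r i l ** R r l j) integrable_on {0..T}" if "i\<in>{1..n}" "j\<in>{1..n}" for i j
      by (intro int_XA(2)[OF R_cont that]) (use Tpos in auto)
    show "Sx s i j = Sx T i j - integral {s..T} (\<lambda>r. - (\<Sum>l\<in>{1..n}. Sx r i l ** A r l j))"
      if "s\<in>{0..T}" "i\<in>{1..n}" "j\<in>{1..n}" for s i j using Sx_eq2 that .
    show "R s i j = R T i j - integral {s..T} (\<lambda>r. \<Sum>l\<in>{1..n}. A r i l ** R r l j)"
      if "s\<in>{0..T}" "i\<in>{1..n}" "j\<in>{1..n}" for s i j using R_eq2 that .
    show "(\<lambda>r. \<Sum>k\<in>{1..n}. (- (\<Sum>l\<in>{1..n}. Sx r i l ** A r l k)) ** R r k j + Sx r i k ** (\<Sum>l\<in>{1..n}. A r k l ** R r l j)) integrable_on {0..T}"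
      if "i\<in>{1..n}" "j\<in>{1..n}" for i j
      unfolding zero by (rule integrable_0)
  qed (use s i j in auto)
  also have "\<dots> = bmul n bid bid i j"
  proof -
    have "bmul n (Sx T) (R T) i j = bmul n bid bid i j"
      unfolding bmul_def by (rule sum.cong) (simp_all add: Sx_T[OF i] R_T[OF _ j])
    then show ?thesis unfolding zero by simp
  qed
  also have "\<dots> = bid i j" by (rule bmul_bid_left[OF i])
  finally show ?thesis .
qed

end

context res begin

definition "Wf r i j = bmul n (R r) (Sx r) i j"
definition "Df r i j = Wf r i j - bid i j"

lemma Wf_cont: "continuous_on {0..T} (\<lambda>s. Wf s i j)" if "i\<in>{1..n}" "j\<in>{1..n}" for i j
  unfolding Wf_def bmul_def
  by (intro continuous_on_sum bounded_bilinear.continuous_on[OF bbmm] R_cont Sx_cont) (use that in auto)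

lemma Df_cont: "continuous_on {0..T} (\<lambda>s. Df s i j)" if "i\<in>{1..n}" "j\<in>{1..n}" for i j
  unfolding Df_def by (intro continuous_intros Wf_cont that)

lemma Phi_alt:
  "(\<Sum>k\<in>{1..n}. (\<Sum>l\<in>{1..n}. A r i l ** R r l k) ** Sx r k j + R r i k ** (- (\<Sum>l\<in>{1..n}. Sx r k l ** A r l j)))
   = (\<Sum>l\<in>{1..n}. A r i l ** Wf r l j) - (\<Sum>l\<in>{1..n}. Wf r i l ** A r l j)"
proof -
  have 1: "(\<Sum>k\<in>{1..n}. (\<Sum>l\<in>{1..n}. A r i l ** R r l k) ** Sx r k j) = (\<Sum>l\<in>{1..n}. A r i l ** Wf r l j)"
    unfolding Wf_def bmul_def by (simp add: sum_mmul mmul_sum matrix_mul_assoc) (rule sum.swap)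
  have 2: "(\<Sum>k\<in>{1..n}. R r i k ** (\<Sum>l\<in>{1..n}. Sx r k l ** A r l j)) = (\<Sum>l\<in>{1..n}. Wf r i l ** A r l j)"
    unfolding Wf_def bmul_def by (simp add: sum_mmul mmul_sum matrix_mul_assoc) (rule sum.swap)
  show ?thesis using 1 2 by (simp add: mm_neg_left sum.distrib sum_negf sum_subtractf)
qed

lemma Phi_D:
  assumes i: "i\<in>{1..n}" and j: "j\<in>{1..n}"
  shows "(\<Sum>l\<in>{1..n}. A r i l ** Wf r l j) - (\<Sum>l\<in>{1..n}. Wf r i l ** A r l j)
   = (\<Sum>l\<in>{1..n}. A r i l ** Df r l j) - (\<Sum>l\<in>{1..n}. Df r i l ** A r l j)"
proof -
  have "(\<Sum>l\<in>{1..n}. A r i l ** bid l j) = bmul n (A r) bid i j" unfolding bmul_def ..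
  also have "\<dots> = A r i j" by (rule bmul_bid_right[OF j])
  finally have a: "(\<Sum>l\<in>{1..n}. A r i l ** bid l j) = A r i j" .
  have "(\<Sum>l\<in>{1..n}. bid i l ** A r l j) = bmul n bid (A r) i j" unfolding bmul_def ..
  also have "\<dots> = A r i j" by (rule bmul_bid_left[OF i])
  finally have b: "(\<Sum>l\<in>{1..n}. bid i l ** A r l j) = A r i j" .
  show ?thesis unfolding Df_def mm_diff_left mm_diff_right sum_subtractf a b
    by (simp add: algebra_simps)
qed

lemma RS_W: assumes s: "s\<in>{0..T}" and i: "i\<in>{1..n}" and j: "j\<in>{1..n}"
  shows "Df s i j = - integral {s..T} (\<lambda>r. (\<Sum>l\<in>{1..n}. A r i l ** Df r l j) - (\<Sum>l\<in>{1..n}. Df r i l ** A r l j))"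
proof -
  obtain KR where KR0: "KR \<ge> 0" and KR: "\<And>s i j. s\<in>{0..T} \<Longrightarrow> i\<in>{1..n} \<Longrightarrow> j\<in>{1..n} \<Longrightarrow> norm (R s i j) \<le> KR"
    using R_bnd by blast
  define LF where "LF = real n * Bm * LA * (EE + KR)"
  have LF0: "0 \<le> LF" unfolding LF_def using Bm(1) LA0 EE0 KR0 by simp
  have "bmul n (R s) (Sx s) i j = bmul n (R T) (Sx T) i j - integral {s..T} (\<lambda>r. \<Sum>k\<in>{1..n}. (\<Sum>l\<in>{1..n}. A r i l ** R r l k) ** Sx r k j + R r i k ** (- (\<Sum>l\<in>{1..n}. Sx r k l ** A r l j)))"
  proof (rule prod_rule[where H="\<lambda>r i j. - (\<Sum>l\<in>{1..n}. Sx r i l ** A r l j)" and F="\<lambda>r i j. \<Sum>l\<in>{1..n}. A r i l ** R r l j" and LF=LF, OF Bm(2) _ LF0])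
    show "0 \<le> Bm" using Bm(1) by simp
    show "0 \<le> T" using Tpos by simp
    show "continuous_on {0..T} (\<lambda>s. Sx s i j)" if "i\<in>{1..n}" "j\<in>{1..n}" for i j using Sx_cont that .
    show "continuous_on {0..T} (\<lambda>s. R s i j)" if "i\<in>{1..n}" "j\<in>{1..n}" for i j using R_cont that .
    show "norm (- (\<Sum>l\<in>{1..n}. Sx r i l ** A r l j)) \<le> LF" if "r\<in>{0..T}" "i\<in>{1..n}" "j\<in>{1..n}" for r i j
    proof -
      have "norm (- (\<Sum>l\<in>{1..n}. Sx r i l ** A r l j)) \<le> (\<Sum>l\<in>{1..n}. Bm * LA * norm (Sx r i l))"
        using norm_XA(1)[OF that] by simp
      also have "\<dots> \<le> (\<Sum>l\<in>{1..n}. Bm * LA * (EE + KR))"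
        using Sx_bnd[OF that(1,2)] Bm(1) LA0 KR0 by (intro sum_mono mult_left_mono) (auto simp: add_increasing2)
      finally show ?thesis unfolding LF_def by (simp add: mult_ac)
    qed
    show "norm (\<Sum>l\<in>{1..n}. A r i l ** R r l j) \<le> LF" if "r\<in>{0..T}" "i\<in>{1..n}" "j\<in>{1..n}" for r i j
    proof -
      have "norm (\<Sum>l\<in>{1..n}. A r i l ** R r l j) \<le> (\<Sum>l\<in>{1..n}. Bm * LA * norm (R r l j))"
        using norm_XA(2)[OF that] by simp
      also have "\<dots> \<le> (\<Sum>l\<in>{1..n}. Bm * LA * (EE + KR))"
        using KR[OF that(1) _ that(3)] Bm(1) LA0 EE0 by (intro sum_mono mult_left_mono) (auto simp: add_increasing)
      finally show ?thesis unfolding LF_def by (simp add: mult_ac)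
    qed
    show "(\<lambda>r. - (\<Sum>l\<in>{1..n}. Sx r i l ** A r l j)) integrable_on {0..T}" if "i\<in>{1..n}" "j\<in>{1..n}" for i j
      by (intro integrable_neg int_XA(1)[OF Sx_cont that]) (use Tpos in auto)
    show "(\<lambda>r. \<Sum>l\<in>{1..n}. A r i l ** R r l j) integrable_on {0..T}" if "i\<in>{1..n}" "j\<in>{1..n}" for i j
      by (intro int_XA(2)[OF R_cont that]) (use Tpos in auto)
    show "Sx s i j = Sx T i j - integral {s..T} (\<lambda>r. - (\<Sum>l\<in>{1..n}. Sx r i l ** A r l j))"
      if "s\<in>{0..T}" "i\<in>{1..n}" "j\<in>{1..n}" for s i j using Sx_eq2 that .
    show "R s i j = R T i j - integral {s..T} (\<lambda>r. \<Sum>l\<in>{1..n}. A r i l ** R r l j)"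
      if "s\<in>{0..T}" "i\<in>{1..n}" "j\<in>{1..n}" for s i j using R_eq2 that .
    show "(\<lambda>r. \<Sum>k\<in>{1..n}. (\<Sum>l\<in>{1..n}. A r i l ** R r l k) ** Sx r k j + R r i k ** (- (\<Sum>l\<in>{1..n}. Sx r k l ** A r l j))) integrable_on {0..T}"
      if "i\<in>{1..n}" "j\<in>{1..n}" for i j
      unfolding Phi_alt
      by (intro integrable_diff int_XA(1)[OF Wf_cont that] int_XA(2)[OF Wf_cont that]) (use Tpos in auto)
  qed (use s i j in auto)
  moreover have "bmul n (R T) (Sx T) i j = bid i j"
  proof -
    have "bmul n (R T) (Sx T) i j = bmul n bid bid i j"
      unfolding bmul_def by (rule sum.cong) (simp_all add: Sx_T[OF _ j] R_T[OF i])
    then show ?thesis using bmul_bid_left[OF i] by simp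
  qed
  ultimately have "Wf s i j = bid i j - integral {s..T} (\<lambda>r. (\<Sum>l\<in>{1..n}. A r i l ** Wf r l j) - (\<Sum>l\<in>{1..n}. Wf r i l ** A r l j))"
    unfolding Phi_alt unfolding Wf_def by simp
  then show ?thesis unfolding Phi_D[OF i j] Df_def by simp
qed

end

context res begin

definition "phi r = (\<Sum>a\<in>{1..n}. \<Sum>b\<in>{1..n}. norm (Df r a b))"

lemma phi_cont: "continuous_on {0..T} phi"
  unfolding phi_def by (intro continuous_on_sum continuous_on_norm Df_cont) auto

lemma phi_col: "j\<in>{1..n} \<Longrightarrow> (\<Sum>l\<in>{1..n}. norm (Df r l j)) \<le> phi r"
  unfolding phi_def by (intro sum_mono member_le_sum) auto

lemma phi_row: "i\<in>{1..n} \<Longrightarrow> (\<Sum>l\<in>{1..n}. norm (Df r i l)) \<le> phi r"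
  unfolding phi_def by (rule member_le_sum) (auto intro: sum_nonneg)

lemma phi_bound: assumes s: "s\<in>{0..T}"
  shows "phi s \<le> (real n * real n * (2 * Bm * LA)) * integral {s..T} phi"
proof -
  have phii: "phi integrable_on {s..T}"
    by (rule integrable_continuous_interval, rule continuous_on_subset[OF phi_cont]) (use s in auto)
  have each: "norm (Df s i j) \<le> 2 * Bm * LA * integral {s..T} phi" if i: "i\<in>{1..n}" and j: "j\<in>{1..n}" for i j
  proof -
    let ?f = "\<lambda>r. (\<Sum>l\<in>{1..n}. A r i l ** Df r l j) - (\<Sum>l\<in>{1..n}. Df r i l ** A r l j)"
    have "norm (Df s i j) = norm (integral {s..T} ?f)" using RS_W[OF s i j] by simp
    also have "\<dots> \<le> integral {s..T} (\<lambda>r. 2 * Bm * LA * phi r)"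
    proof (rule integral_norm_bound_integral)
      show "?f integrable_on {s..T}"
        by (intro integrable_diff int_XA(1)[OF Df_cont i j] int_XA(2)[OF Df_cont i j]) (use s in auto)
      show "(\<lambda>r. 2 * Bm * LA * phi r) integrable_on {s..T}" using integrable_on_cmult_left[OF phii, of "2 * Bm * LA"] by simp
      fix r assume r: "r \<in> {s..T}"
      then have r0: "r \<in> {0..T}" using s by auto
      have "norm (?f r) \<le> norm (\<Sum>l\<in>{1..n}. A r i l ** Df r l j) + norm (\<Sum>l\<in>{1..n}. Df r i l ** A r l j)"
        by (rule norm_triangle_ineq4)
      also have "\<dots> \<le> (\<Sum>l\<in>{1..n}. Bm * LA * norm (Df r l j)) + (\<Sum>l\<in>{1..n}. Bm * LA * norm (Df r i l))"
        by (intro add_mono norm_XA(1)[OF r0 i j] norm_XA(2)[OF r0 i j])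
      also have "\<dots> = Bm * LA * (\<Sum>l\<in>{1..n}. norm (Df r l j)) + Bm * LA * (\<Sum>l\<in>{1..n}. norm (Df r i l))"
        by (simp add: sum_distrib_left)
      also have "\<dots> \<le> Bm * LA * phi r + Bm * LA * phi r"
        using Bm(1) LA0 phi_col[OF j] phi_row[OF i] by (intro add_mono mult_left_mono) auto
      finally show "norm (?f r) \<le> 2 * Bm * LA * phi r" by simp
    qed
    also have "\<dots> = 2 * Bm * LA * integral {s..T} phi" by (rule integral_mult_right)
    finally show ?thesis .
  qed
  have "phi s \<le> (\<Sum>a\<in>{1..n}. \<Sum>b\<in>{1..n}. 2 * Bm * LA * integral {s..T} phi)"
    unfolding phi_def[of s] by (intro sum_mono each)
  also have "\<dots> = (real n * real n * (2 * Bm * LA)) * integral {s..T} phi" by simp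
  finally show ?thesis .
qed

lemma RS: assumes s: "s\<in>{0..T}" and i: "i\<in>{1..n}" and j: "j\<in>{1..n}"
  shows "bmul n (R s) (Sx s) i j = bid i j"
proof -
  have "phi s = 0"
    by (rule gronwall0[OF phi_cont _ _ phi_bound s])
       (use Bm(1) LA0 in \<open>auto simp: phi_def intro!: sum_nonneg\<close>)
  moreover have "norm (Df s i j) \<le> phi s"
    using phi_row[OF i, of s] member_le_sum[of j "{1..n}" "\<lambda>l. norm (Df s i l)"] j by simp
  ultimately have "Df s i j = 0" by simp
  then show ?thesis unfolding Df_def Wf_def by simp
qed

end

context res begin

lemma R_tri: "\<exists>K. \<forall>s\<in>{0..T}. \<forall>i\<in>{1..n}. \<forall>j\<in>{1..n}. norm (R s i j) \<le> K * (T-s)^(i-j)"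
proof -
  obtain K0 where K0: "\<And>s i j. s\<in>{0..T} \<Longrightarrow> i\<in>{1..n} \<Longrightarrow> j\<in>{1..n} \<Longrightarrow> norm (R s i j) \<le> K0"
    using R_bnd by blast
  show ?thesis
  proof (rule tri[OF Tpos _ K0])
    show "0 \<le> Bm * LA" using Bm(1) LA0 by simp
    fix s i j assume s: "s\<in>{0..T}" and i: "i\<in>{1..n}" and j: "j\<in>{1..n}" and ji: "j < i"
    have hi: "((\<lambda>r. - (\<Sum>k\<in>{1..n}. A r i k ** R r k j)) has_integral R s i j) {s..T}"
      using has_integral_neg[OF resolvent[OF s i j]] ji by (simp add: bid_def)
    show "\<exists>g. (g has_integral R s i j) {s..T} \<and>
         (\<forall>r\<in>{s..T}. norm (g r) \<le> Bm * LA * (\<Sum>a\<in>{1..n}. \<Sum>b\<in>{1..n}. if i + b \<le> a + j + 1 then norm (R r a b) else 0))"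
    proof (intro exI conjI ballI, rule hi)
      fix r assume r: "r \<in> {s..T}"
      then have r0: "r \<in> {0..T}" using s by auto
      have "norm (- (\<Sum>k\<in>{1..n}. A r i k ** R r k j)) \<le> (\<Sum>k\<in>{1..n}. norm (A r i k ** R r k j))"
        using norm_sum by simp
      also have "\<dots> \<le> (\<Sum>k\<in>{1..n}. Bm * LA * (if i \<le> k + 1 then norm (R r k j) else 0))"
      proof (rule sum_mono)
        fix k assume k: "k \<in> {1..n}"
        show "norm (A r i k ** R r k j) \<le> Bm * LA * (if i \<le> k + 1 then norm (R r k j) else 0)"
        proof (cases "i \<le> k + 1")
          case True
          have "norm (A r i k ** R r k j) \<le> Bm * norm (A r i k) * norm (R r k j)" by (rule Bm(2))
          also have "\<dots> \<le> Bm * LA * norm (R r k j)"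
            using Abd[OF r0 i k] Bm(1) by (intro mult_right_mono mult_left_mono) auto
          finally show ?thesis using True by simp
        next
          case False
          then show ?thesis using Astruct[OF r0 i k] by simp
        qed
      qed
      also have "\<dots> = Bm * LA * (\<Sum>k\<in>{1..n}. if i \<le> k + 1 then norm (R r k j) else 0)"
        by (simp add: sum_distrib_left)
      also have "\<dots> \<le> Bm * LA * (\<Sum>a\<in>{1..n}. \<Sum>b\<in>{1..n}. if i + b \<le> a + j + 1 then norm (R r a b) else 0)"
      proof (intro mult_left_mono sum_mono)
        fix a assume a: "a \<in> {1..n}"
        have "(if i \<le> a + 1 then norm (R r a j) else 0) = (if i + j \<le> a + j + 1 then norm (R r a j) else 0)"
          by simp
        also have "\<dots> \<le> (\<Sum>b\<in>{1..n}. if i + b \<le> a + j + 1 then norm (R r a b) else 0)"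
          by (rule member_le_sum[where f="\<lambda>b. if i + b \<le> a + j + 1 then norm (R r a b) else 0"]) (use j in auto)
        finally show "(if i \<le> a + 1 then norm (R r a j) else 0) \<le> (\<Sum>b\<in>{1..n}. if i + b \<le> a + j + 1 then norm (R r a b) else 0)" .
      qed (use Bm(1) LA0 in auto)
      finally show "norm (- (\<Sum>k\<in>{1..n}. A r i k ** R r k j)) \<le> Bm * LA * (\<Sum>a\<in>{1..n}. \<Sum>b\<in>{1..n}. if i + b \<le> a + j + 1 then norm (R r a b) else 0)" .
    qed
  qed
qed

lemma S_tri: "\<exists>K. \<forall>s\<in>{0..T}. \<forall>i\<in>{1..n}. \<forall>j\<in>{1..n}. norm (Sx s i j) \<le> K * (T-s)^(i-j)"
proof -
  show ?thesis
  proof (rule tri[OF Tpos _ Sx_bnd])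
    show "0 \<le> Bm * LA" using Bm(1) LA0 by simp
    fix s i j assume s: "s\<in>{0..T}" and i: "i\<in>{1..n}" and j: "j\<in>{1..n}" and ji: "j < i"
    have hi: "((\<lambda>r. \<Sum>l\<in>{1..n}. Sx r i l ** A r l j) has_integral Sx s i j) {s..T}"
      using integrable_integral[OF Sx_eq(1)[OF s i j]] Sx_eq(2)[OF s i j] ji by (simp add: bid_def)
    show "\<exists>g. (g has_integral Sx s i j) {s..T} \<and>
         (\<forall>r\<in>{s..T}. norm (g r) \<le> Bm * LA * (\<Sum>a\<in>{1..n}. \<Sum>b\<in>{1..n}. if i + b \<le> a + j + 1 then norm (Sx r a b) else 0))"
    proof (intro exI conjI ballI, rule hi)
      fix r assume r: "r \<in> {s..T}"
      then have r0: "r \<in> {0..T}" using s by auto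
      have "norm (\<Sum>l\<in>{1..n}. Sx r i l ** A r l j) \<le> (\<Sum>l\<in>{1..n}. norm (Sx r i l ** A r l j))"
        by (rule norm_sum)
      also have "\<dots> \<le> (\<Sum>l\<in>{1..n}. Bm * LA * (if i + l \<le> i + j + 1 then norm (Sx r i l) else 0))"
      proof (rule sum_mono)
        fix l assume l: "l \<in> {1..n}"
        show "norm (Sx r i l ** A r l j) \<le> Bm * LA * (if i + l \<le> i + j + 1 then norm (Sx r i l) else 0)"
        proof (cases "i + l \<le> i + j + 1")
          case True
          have "norm (Sx r i l ** A r l j) \<le> Bm * norm (Sx r i l) * norm (A r l j)" by (rule Bm(2))
          also have "\<dots> \<le> Bm * norm (Sx r i l) * LA"
            using Abd[OF r0 l j] Bm(1) by (intro mult_left_mono) auto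
          finally show ?thesis using True by (simp add: mult_ac)
        next
          case False
          then show ?thesis using Astruct[OF r0 l j] by simp
        qed
      qed
      also have "\<dots> = Bm * LA * (\<Sum>l\<in>{1..n}. if i + l \<le> i + j + 1 then norm (Sx r i l) else 0)"
        by (simp add: sum_distrib_left)
      also have "\<dots> \<le> Bm * LA * (\<Sum>a\<in>{1..n}. \<Sum>b\<in>{1..n}. if i + b \<le> a + j + 1 then norm (Sx r a b) else 0)"
        by (intro mult_left_mono member_le_sum[where f="\<lambda>a. \<Sum>b\<in>{1..n}. if i + b \<le> a + j + 1 then norm (Sx r a b) else 0"])
           (use i Bm(1) LA0 in \<open>auto intro: sum_nonneg\<close>)
      finally show "norm (\<Sum>l\<in>{1..n}. Sx r i l ** A r l j) \<le> Bm * LA * (\<Sum>a\<in>{1..n}. \<Sum>b\<in>{1..n}. if i + b \<le> a + j + 1 then norm (Sx r a b) else 0)" .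
    qed
  qed
qed

end

lemma diag_left:
  assumes i: "i \<in> {1..n}"
  shows "bmul n (Tscale \<alpha> \<tau>) Y i j = (\<tau> powr (real i - 1 + 1 / \<alpha>)) *\<^sub>R (Y i j :: real^'d::finite^'d)"
proof -
  have "bmul n (Tscale \<alpha> \<tau>) Y i j = (\<Sum>k\<in>{1..n}. if i = k then (\<tau> powr (real i - 1 + 1 / \<alpha>)) *\<^sub>R Y k j else 0)"
    unfolding bmul_def Tscale_def by (intro sum.cong) (auto simp: scalar_matrix_assoc[symmetric])
  also have "\<dots> = (\<tau> powr (real i - 1 + 1 / \<alpha>)) *\<^sub>R Y i j" using i by simp
  finally show ?thesis .
qed

lemma diag_right:
  assumes j: "j \<in> {1..n}"
  shows "bmul n Y (Tscale_inv \<alpha> \<tau>) i j = (\<tau> powr (- (real j - 1 + 1 / \<alpha>))) *\<^sub>R (Y i j :: real^'d::finite^'d)"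
proof -
  have "bmul n Y (Tscale_inv \<alpha> \<tau>) i j = (\<Sum>k\<in>{1..n}. if k = j then (\<tau> powr (- (real j - 1 + 1 / \<alpha>))) *\<^sub>R Y i k else 0)"
    unfolding bmul_def Tscale_inv_def by (intro sum.cong) (auto simp: matrix_scalar_ac)
  also have "\<dots> = (\<tau> powr (- (real j - 1 + 1 / \<alpha>))) *\<^sub>R Y i j" using j by simp
  finally show ?thesis .
qed

lemma scaled_mul:
  fixes X Y :: "'d::finite bmat"
  assumes tau: "0 < \<tau>"
  shows "bmul n (\<lambda>i j. (\<tau> powr (real j - real i)) *\<^sub>R X i j) (\<lambda>i j. (\<tau> powr (real j - real i)) *\<^sub>R Y i j) i j
    = (\<tau> powr (real j - real i)) *\<^sub>R bmul n X Y i j"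
proof -
  have "(\<tau> powr (real k - real i)) *\<^sub>R X i k ** (\<tau> powr (real j - real k)) *\<^sub>R Y k j
      = (\<tau> powr (real j - real i)) *\<^sub>R (X i k ** Y k j)" for k
  proof -
    have "\<tau> powr (real k - real i) * \<tau> powr (real j - real k) = \<tau> powr (real j - real i)"
      using tau by (simp add: powr_add[symmetric])
    then show ?thesis by (simp add: matrix_scalar_ac scalar_matrix_assoc[symmetric] mult.commute)
  qed
  then show ?thesis unfolding bmul_def by (simp add: scaleR_sum_right)
qed

lemma scale_bound:
  fixes X :: "real^'d::finite^'d"
  assumes tau: "0 < \<tau>" "\<tau> \<le> T" and s: "0 \<le> T - s" "T - s \<le> \<tau>"
    and X: "norm X \<le> K * (T - s)^(i - j)" and i: "i \<le> n" and j: "j \<le> n"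
  shows "norm ((\<tau> powr (real j - real i)) *\<^sub>R X) \<le> \<bar>K\<bar> * (1 + T)^n"
proof -
  have T0: "0 \<le> T" using tau by simp
  have "norm ((\<tau> powr (real j - real i)) *\<^sub>R X) = \<tau> powr (real j - real i) * norm X" by simp
  also have "\<dots> \<le> \<tau> powr (real j - real i) * (\<bar>K\<bar> * (T - s)^(i - j))"
  proof (intro mult_left_mono)
    have "K * (T - s)^(i - j) \<le> \<bar>K\<bar> * (T - s)^(i - j)"
      using s by (intro mult_right_mono) auto
    then show "norm X \<le> \<bar>K\<bar> * (T - s)^(i - j)" using X by linarith
  qed simp
  also have "\<dots> \<le> \<bar>K\<bar> * (1 + T)^n"
  proof (cases "j \<le> i")
    case True
    have "(T - s)^(i - j) \<le> \<tau>^(i - j)" using s by (intro power_mono) auto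
    then have "\<tau> powr (real j - real i) * (T - s)^(i - j) \<le> \<tau> powr (real j - real i) * \<tau>^(i - j)"
      by (intro mult_left_mono) auto
    also have "\<tau> powr (real j - real i) * \<tau>^(i - j) = 1"
      using tau True by (simp add: powr_realpow[symmetric] powr_add[symmetric] of_nat_diff)
    finally have "\<tau> powr (real j - real i) * (T - s)^(i - j) \<le> 1" .
    moreover have "1 \<le> (1 + T)^n" using T0 by (intro one_le_power) auto
    ultimately have "\<tau> powr (real j - real i) * (T - s)^(i - j) \<le> (1 + T)^n" by linarith
    then show ?thesis by (metis abs_ge_zero mult.left_commute mult_left_mono)
  next
    case False
    then have ij: "i - j = 0" by simp
    have "\<tau> powr (real j - real i) = \<tau> ^ (j - i)"
      using tau False by (simp add: powr_realpow[symmetric] of_nat_diff)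
    also have "\<dots> \<le> (1 + T) ^ (j - i)" using tau by (intro power_mono) auto
    also have "\<dots> \<le> (1 + T) ^ n" using T0 j by (intro power_increasing) auto
    finally have "\<tau> powr (real j - real i) \<le> (1 + T) ^ n" .
    then show ?thesis using ij by (simp add: mult.commute mult_left_mono)
  qed
  finally show ?thesis .
qed

theorem lemma5p2:
  fixes A R :: "real \<Rightarrow> 'd::finite bmat"
    and n :: nat and \<alpha> \<alpha>l \<alpha>u T :: real
  assumes n: "n \<ge> 1"
    and alpha: "0 < \<alpha>" "\<alpha> < 2"
    and T: "0 < T"
    and A_meas: "\<And>i j. (\<lambda>s. A s i j) \<in> borel_measurable lborel"
    and A_struct: "\<And>s i j. s \<in> {0..T} \<Longrightarrow> i \<in> {1..n} \<Longrightarrow> j \<in> {1..n} \<Longrightarrow>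
                     j + 1 < i \<Longrightarrow> A s i j = 0"
    and H3_ell: "\<And>s i \<xi>. s \<in> {0..T} \<Longrightarrow> i \<in> {2..n} \<Longrightarrow>
                     \<alpha>l * (norm \<xi>)\<^sup>2 \<le> \<xi> \<bullet> (A s i (i - 1) *v \<xi>) \<and>
                     \<xi> \<bullet> (A s i (i - 1) *v \<xi>) \<le> \<alpha>u * (norm \<xi>)\<^sup>2"
    and H3_bd: "\<And>s i j. s \<in> {0..T} \<Longrightarrow> i \<in> {1..n} \<Longrightarrow> j \<in> {1..n} \<Longrightarrow>
                     onorm (\<lambda>x. A s i j *v x) \<le> \<alpha>u"
    and resolvent: "\<And>s i j. s \<in> {0..T} \<Longrightarrow> i \<in> {1..n} \<Longrightarrow> j \<in> {1..n} \<Longrightarrow>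
                     ((\<lambda>r. \<Sum>k\<in>{1..n}. A r i k ** R r k j) has_integral (bid i j - R s i j)) {s..T}"
  shows "\<exists>C. \<forall>t\<in>{0..<T}. \<exists>Rh :: real \<Rightarrow> 'd bmat.
           (\<forall>s\<in>{t..T}. beq n (R s)
               (bmul n (Tscale \<alpha> (T - t)) (bmul n (Rh ((s - t) / (T - t))) (Tscale_inv \<alpha> (T - t))))) \<and>
           (\<forall>u\<in>{0..1}. (\<forall>i\<in>{1..n}. \<forall>j\<in>{1..n}. norm (Rh u i j) \<le> C) \<and>
              (\<exists>Q :: 'd bmat. beq n (bmul n (Rh u) Q) bid \<and> beq n (bmul n Q (Rh u)) bid \<and>
                 (\<forall>i\<in>{1..n}. \<forall>j\<in>{1..n}. norm (Q i j) \<le> C)))"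
proof -
  let ?I = "{1..n}"
  obtain Bc where Bc0: "0 < Bc" and Bc: "\<And>(x::real^'d^'d) (y::real^'d^'d). norm (x ** y) \<le> Bc * norm x * norm y"
    using mm_bound[where 'd='d] by blast
  define LA where "LA = real CARD('d) * real CARD('d) * \<alpha>u"
  have Anorm: "norm (A s i j) \<le> LA" if "s\<in>{0..T}" "i\<in>?I" "j\<in>?I" for s i j
    unfolding LA_def by (rule onorm_to_norm[OF H3_bd[OF that]])
  have LA0: "0 \<le> LA"
  proof -
    have "norm (A 0 1 1) \<le> LA" using Anorm[of 0 1 1] n T by simp
    then show ?thesis using norm_ge_zero[of "A 0 1 1"] by linarith
  qed
  define Mb where "Mb = norm (mat 1 :: real^'d^'d)"
  have bidn: "norm (bid i j :: real^'d^'d) \<le> Mb" for i j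
    unfolding bid_def Mb_def by auto
  interpret r: res n T LA Bc Mb A R
  proof unfold_locales
    show "0 < T" by (rule T)
    show "0 \<le> LA" by (rule LA0)
    show "0 < Bc" by (rule Bc0)
    show "norm (x ** y) \<le> Bc * norm x * norm y" for x y :: "real^'d^'d" by (rule Bc)
    show "norm (bid i j :: real^'d^'d) \<le> Mb" for i j by (rule bidn)
    show "(\<lambda>s. A s i j) \<in> borel_measurable lborel" for i j by (rule A_meas)
    show "norm (A s i j) \<le> LA" if "s\<in>{0..T}" "i\<in>{1..n}" "j\<in>{1..n}" for s i j using Anorm that .
    show "((\<lambda>r. \<Sum>k\<in>{1..n}. A r i k ** R r k j) has_integral (bid i j - R s i j)) {s..T}"
      if "s\<in>{0..T}" "i\<in>{1..n}" "j\<in>{1..n}" for s i j using resolvent that .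
    show "A s i j = 0" if "s\<in>{0..T}" "i\<in>{1..n}" "j\<in>{1..n}" "j + 1 < i" for s i j using A_struct that .
  qed
  obtain KR where KR: "\<forall>s\<in>{0..T}. \<forall>i\<in>?I. \<forall>j\<in>?I. norm (R s i j) \<le> KR * (T-s)^(i-j)"
    using r.R_tri by blast
  obtain KS where KS: "\<forall>s\<in>{0..T}. \<forall>i\<in>?I. \<forall>j\<in>?I. norm (r.Sx s i j) \<le> KS * (T-s)^(i-j)"
    using r.S_tri by blast
  define C where "C = (\<bar>KR\<bar> + \<bar>KS\<bar>) * (1 + T)^n"
  have C1: "\<bar>KR\<bar> * (1 + T)^n \<le> C" and C2: "\<bar>KS\<bar> * (1 + T)^n \<le> C"
    unfolding C_def using T by (auto intro!: mult_right_mono)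
  show ?thesis
  proof (intro exI[of _ C] ballI)
    fix t assume t: "t \<in> {0..<T}"
    have tau: "0 < T - t" "T - t \<le> T" using t by auto
    define Rh where "Rh u = (\<lambda>i j. ((T - t) powr (real j - real i)) *\<^sub>R R (t + u * (T - t)) i j)" for u
    define Q where "Q u = (\<lambda>i j. ((T - t) powr (real j - real i)) *\<^sub>R r.Sx (t + u * (T - t)) i j)" for u
    show "\<exists>Rh :: real \<Rightarrow> 'd bmat.
           (\<forall>s\<in>{t..T}. beq n (R s)
               (bmul n (Tscale \<alpha> (T - t)) (bmul n (Rh ((s - t) / (T - t))) (Tscale_inv \<alpha> (T - t))))) \<and>
           (\<forall>u\<in>{0..1}. (\<forall>i\<in>{1..n}. \<forall>j\<in>{1..n}. norm (Rh u i j) \<le> C) \<and>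
              (\<exists>Q :: 'd bmat. beq n (bmul n (Rh u) Q) bid \<and> beq n (bmul n Q (Rh u)) bid \<and>
                 (\<forall>i\<in>{1..n}. \<forall>j\<in>{1..n}. norm (Q i j) \<le> C)))"
    proof (intro exI[of _ Rh] conjI ballI)
      fix s assume s: "s \<in> {t..T}"
      have ts: "t + (s - t) / (T - t) * (T - t) = s" using tau by simp
      show "beq n (R s) (bmul n (Tscale \<alpha> (T - t)) (bmul n (Rh ((s - t) / (T - t))) (Tscale_inv \<alpha> (T - t))))"
        unfolding beq_def
      proof (intro ballI)
        fix i j assume i: "i \<in> ?I" and j: "j \<in> ?I"
        have e: "(T - t) powr (real i - 1 + 1 / \<alpha>) * ((T - t) powr (- (real j - 1 + 1 / \<alpha>)) * (T - t) powr (real j - real i)) = 1"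
          using tau by (simp add: powr_add[symmetric])
        show "R s i j = bmul n (Tscale \<alpha> (T - t)) (bmul n (Rh ((s - t) / (T - t))) (Tscale_inv \<alpha> (T - t))) i j"
          unfolding diag_left[OF i] diag_right[OF j] Rh_def ts using e by simp
      qed
    next
      fix u :: real assume u: "u \<in> {0..1}"
      define s where "s = t + u * (T - t)"
      have s0: "s \<in> {0..T}" and s1: "0 \<le> T - s" "T - s \<le> T - t"
      proof -
        have h1: "u * (T - t) \<le> T - t" using u tau mult_right_mono[of u 1 "T - t"] by auto
        have h2: "0 \<le> u * (T - t)" using u tau by auto
        have h3: "0 \<le> t" using t by auto
        show "s \<in> {0..T}" unfolding s_def using h1 h2 h3 by auto
        show "0 \<le> T - s" unfolding s_def using h1 by linarith
        show "T - s \<le> T - t" unfolding s_def using h2 by linarith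
      qed
      have bidsc: "((T - t) powr (real j - real i)) *\<^sub>R bid i j = (bid i j :: real^'d^'d)" for i j
        unfolding bid_def using tau by auto
      show "norm (Rh u i j) \<le> C" if i: "i \<in> ?I" and j: "j \<in> ?I" for i j
      proof -
        have "norm (Rh u i j) \<le> \<bar>KR\<bar> * (1 + T)^n"
          unfolding Rh_def s_def[symmetric]
          by (rule scale_bound[OF tau s1]) (use KR s0 i j in auto)
        then show "norm (Rh u i j) \<le> C" using C1 by linarith
      qed
      show "\<exists>Q :: 'd bmat. beq n (bmul n (Rh u) Q) bid \<and> beq n (bmul n Q (Rh u)) bid \<and>
                 (\<forall>i\<in>{1..n}. \<forall>j\<in>{1..n}. norm (Q i j) \<le> C)"
      proof (intro exI[of _ "Q u"] conjI)
        show "beq n (bmul n (Rh u) (Q u)) bid"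
          unfolding beq_def Rh_def Q_def s_def[symmetric] scaled_mul[OF tau(1)]
          using r.RS[OF s0] bidsc by simp
        show "beq n (bmul n (Q u) (Rh u)) bid"
          unfolding beq_def Rh_def Q_def s_def[symmetric] scaled_mul[OF tau(1)]
          using r.SR[OF s0] bidsc by simp
        show "\<forall>i\<in>{1..n}. \<forall>j\<in>{1..n}. norm (Q u i j) \<le> C"
        proof (intro ballI)
          fix i j assume i: "i \<in> ?I" and j: "j \<in> ?I"
          have "norm (Q u i j) \<le> \<bar>KS\<bar> * (1 + T)^n"
            unfolding Q_def s_def[symmetric]
            by (rule scale_bound[OF tau s1]) (use KS s0 i j in auto)
          then show "norm (Q u i j) \<le> C" using C2 by linarith
        qed
      qed
    qed
  qed
qed

end
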